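(* Let $\rho_{ABC}\in M_2(\mathbb{C})\otimes M_2(\mathbb{C})\otimes M_d(\mathbb{C})$ be a state with $\mathrm{rank}(\rho_{ABC})=2$. Let $\{M_{a|0}\}_{a=0}^1$ and $\{M_{a|1}\}_{a=0}^1$ be POVMs on subsystem $A$, and assume that for both $a\in\{0,1\}$ the operator $\rho_{a|0}=\mathrm{Tr}_A\big((M_{a|0}\otimes\mathbb{1}\otimes\mathbb{1})\rho_{ABC}\big)$ on $\mathbb{C}^2\otimes\mathbb{C}^d$ (systems $B,C$) has rank one and is (proportional to the projector onto) an entangled vector. Then there exist projective measurements $\{Q_{b|0}\}_{b=0}^1,\{Q_{b|1}\}_{b=0}^1$ on subsystem $B$ such that the assemblage $\Sigma=\{\sigma_{ab|xy}\}$, $\sigma_{ab|xy}=\mathrm{Tr}_{AB}\big((M_{a|x}\otimes Q_{b|y}\otimes\mathbb{1})\rho_{ABC}\big)$ ($a,b,x,y\in\{0,1\}$), is on the edge of the set of no-signaling assemblages.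
   Context: Scenario with two untrusted parties, binary outcomes $a,b\in\{0,1\}$ and binary settings $x,y\in\{0,1\}$, trusted system $\mathbb{C}^d$. A no-signaling assemblage is a collection of positive semidefinite operators $\sigma_{ab|xy}$ on $\mathbb{C}^d$ with $\sum_{a,b}\sigma_{ab|xy}=\rho$ independent of $x,y$ and of trace one, $\sum_b\sigma_{ab|xy}$ independent of $y$, and $\sum_a\sigma_{ab|xy}$ independent of $x$. An LHS assemblage is one of the form $\sigma_{ab|xy}=\sum_j q_j p_j(a|x)p'_j(b|y)\rho_j$ with probability weights $q_j$, density operators $\rho_j$ and conditional probability distributions $p_j,p'_j$. A no-signaling assemblage $\Sigma$ is on the edge if whenever $\Sigma=\epsilon\Sigma_1+(1-\epsilon)\Sigma_2$ with $\epsilon\in[0,1]$, $\Sigma_1$ LHS and $\Sigma_2$ no-signaling, necessarily $\epsilon=0$. *)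

theory Defs
  imports "Jordan_Normal_Form.DL_Rank" "Jordan_Normal_Form.Schur_Decomposition"
begin

text \<open>Operators on C^n are complex n x n matrices (JNF). Tensor products are Kronecker
products with the standard index convention (first factor is the most significant index).\<close>

definition kron :: "complex mat \<Rightarrow> complex mat \<Rightarrow> complex mat" where
  "kron A B = mat (dim_row A * dim_row B) (dim_col A * dim_col B)
     (\<lambda>(i,j). A $$ (i div dim_row B, j div dim_col B) * B $$ (i mod dim_row B, j mod dim_col B))"

definition kron_vec :: "complex vec \<Rightarrow> complex vec \<Rightarrow> complex vec" where
  "kron_vec u v = vec (dim_vec u * dim_vec v) (\<lambda>i. u $ (i div dim_vec v) * v $ (i mod dim_vec v))"

definition trace_mat :: "complex mat \<Rightarrow> complex" where
  "trace_mat A = (\<Sum>i<dim_row A. A $$ (i,i))"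

definition ptrace_fst :: "nat \<Rightarrow> nat \<Rightarrow> complex mat \<Rightarrow> complex mat" where
  "ptrace_fst m n X = mat n n (\<lambda>(i,j). \<Sum>k<m. X $$ (k*n+i, k*n+j))"

definition outer :: "complex vec \<Rightarrow> complex vec \<Rightarrow> complex mat" where
  "outer u v = mat (dim_vec u) (dim_vec v) (\<lambda>(i,j). u $ i * cnj (v $ j))"

definition hermitian :: "nat \<Rightarrow> complex mat \<Rightarrow> bool" where
  "hermitian n A \<longleftrightarrow> A \<in> carrier_mat n n \<and> mat_adjoint A = A"

definition psd :: "nat \<Rightarrow> complex mat \<Rightarrow> bool" where
  "psd n A \<longleftrightarrow> hermitian n A \<and>
     (\<forall>v \<in> carrier_vec n. Im ((A *\<^sub>v v) \<bullet>c v) = 0 \<and> 0 \<le> Re ((A *\<^sub>v v) \<bullet>c v))"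

definition density :: "nat \<Rightarrow> complex mat \<Rightarrow> bool" where
  "density n A \<longleftrightarrow> psd n A \<and> trace_mat A = 1"

definition mrank :: "nat \<Rightarrow> complex mat \<Rightarrow> nat" where
  "mrank n A = vec_space.rank n (A :: complex mat)"

definition povm2 :: "nat \<Rightarrow> complex mat \<Rightarrow> complex mat \<Rightarrow> bool" where
  "povm2 n E0 E1 \<longleftrightarrow> psd n E0 \<and> psd n E1 \<and> E0 + E1 = 1\<^sub>m n"

definition projective2 :: "nat \<Rightarrow> complex mat \<Rightarrow> complex mat \<Rightarrow> bool" where
  "projective2 n P0 P1 \<longleftrightarrow> hermitian n P0 \<and> hermitian n P1 \<and>
     P0 * P0 = P0 \<and> P1 * P1 = P1 \<and> P0 + P1 = 1\<^sub>m n"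

definition entangled :: "nat \<Rightarrow> nat \<Rightarrow> complex vec \<Rightarrow> bool" where
  "entangled m n \<psi> \<longleftrightarrow> \<psi> \<in> carrier_vec (m*n) \<and>
     \<not> (\<exists>u \<in> carrier_vec m. \<exists>v \<in> carrier_vec n. \<psi> = kron_vec u v)"

text \<open>Assemblage: S a b x y = sigma_{ab|xy}; only indices in {0,1} are relevant.\<close>
type_synonym assemblage = "nat \<Rightarrow> nat \<Rightarrow> nat \<Rightarrow> nat \<Rightarrow> complex mat"

abbreviation bits :: "nat set" where "bits \<equiv> {0,1}"

definition no_signaling :: "nat \<Rightarrow> assemblage \<Rightarrow> bool" where
  "no_signaling d S \<longleftrightarrow>
     (\<forall>a\<in>bits. \<forall>b\<in>bits. \<forall>x\<in>bits. \<forall>y\<in>bits. psd d (S a b x y)) \<and>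
     (\<exists>\<rho>. \<rho> \<in> carrier_mat d d \<and> trace_mat \<rho> = 1 \<and>
        (\<forall>x\<in>bits. \<forall>y\<in>bits. S 0 0 x y + S 0 1 x y + S 1 0 x y + S 1 1 x y = \<rho>)) \<and>
     (\<forall>a\<in>bits. \<forall>x\<in>bits. S a 0 x 0 + S a 1 x 0 = S a 0 x 1 + S a 1 x 1) \<and>
     (\<forall>b\<in>bits. \<forall>y\<in>bits. S 0 b 0 y + S 1 b 0 y = S 0 b 1 y + S 1 b 1 y)"

definition LHS :: "nat \<Rightarrow> assemblage \<Rightarrow> bool" where
  "LHS d S \<longleftrightarrow> (\<exists>(N::nat) (q::nat \<Rightarrow> real) (p::nat \<Rightarrow> nat \<Rightarrow> nat \<Rightarrow> real)
        (p'::nat \<Rightarrow> nat \<Rightarrow> nat \<Rightarrow> real) (r::nat \<Rightarrow> complex mat).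
     (\<forall>j<N. 0 \<le> q j) \<and> (\<Sum>j<N. q j) = 1 \<and>
     (\<forall>j<N. density d (r j)) \<and>
     (\<forall>j<N. \<forall>a\<in>bits. \<forall>x\<in>bits. 0 \<le> p j a x \<and> 0 \<le> p' j a x) \<and>
     (\<forall>j<N. \<forall>x\<in>bits. p j 0 x + p j 1 x = 1 \<and> p' j 0 x + p' j 1 x = 1) \<and>
     (\<forall>a\<in>bits. \<forall>b\<in>bits. \<forall>x\<in>bits. \<forall>y\<in>bits.
        S a b x y = mat d d (\<lambda>ij. \<Sum>j<N. complex_of_real (q j * p j a x * p' j b y) * r j $$ ij)))"

definition on_edge :: "nat \<Rightarrow> assemblage \<Rightarrow> bool" where
  "on_edge d S \<longleftrightarrow> no_signaling d S \<and>
     (\<forall>(\<epsilon>::real) S1 S2. 0 \<le> \<epsilon> \<and> \<epsilon> \<le> 1 \<and> LHS d S1 \<and> no_signaling d S2 \<and>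
        (\<forall>a\<in>bits. \<forall>b\<in>bits. \<forall>x\<in>bits. \<forall>y\<in>bits.
           S a b x y = complex_of_real \<epsilon> \<cdot>\<^sub>m S1 a b x y + complex_of_real (1 - \<epsilon>) \<cdot>\<^sub>m S2 a b x y)
        \<longrightarrow> \<epsilon> = 0)"

end

theory Submission
  imports Defs
begin
definition qf :: "nat \<Rightarrow> complex mat \<Rightarrow> (nat \<Rightarrow> complex) \<Rightarrow> complex" where
  "qf n A f = (\<Sum>i<n. \<Sum>j<n. cnj (f i) * A$$(i,j) * f j)"

lemma mat_adjoint_index:
  "i < dim_col A \<Longrightarrow> j < dim_row A \<Longrightarrow> mat_adjoint A $$ (i,j) = cnj (A $$ (j,i))"
  "dim_row (mat_adjoint A) = dim_col A" "dim_col (mat_adjoint A) = dim_row A"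
  unfolding mat_adjoint_def by (simp_all add: mat_of_rows_index)

lemma hermitian_iff: "hermitian n A \<longleftrightarrow> A \<in> carrier_mat n n \<and> (\<forall>i<n. \<forall>j<n. A$$(i,j) = cnj (A$$(j,i)))"
proof
  assume h: "hermitian n A"
  have c: "A \<in> carrier_mat n n" using h unfolding hermitian_def by blast
  have e: "mat_adjoint A = A" using h unfolding hermitian_def by blast
  have "\<forall>i<n. \<forall>j<n. A$$(i,j) = cnj (A$$(j,i))"
  proof (intro allI impI)
    fix i j assume ij: "i < n" "j < n"
    have "mat_adjoint A $$ (i,j) = cnj (A$$(j,i))" using c ij by (intro mat_adjoint_index(1)) auto
    then show "A$$(i,j) = cnj (A$$(j,i))" unfolding e .
  qed
  then show "A \<in> carrier_mat n n \<and> (\<forall>i<n. \<forall>j<n. A$$(i,j) = cnj (A$$(j,i)))" using c by blast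
next
  assume h: "A \<in> carrier_mat n n \<and> (\<forall>i<n. \<forall>j<n. A$$(i,j) = cnj (A$$(j,i)))"
  have c: "A \<in> carrier_mat n n" using h by simp
  have "mat_adjoint A = A"
  proof (rule eq_matI)
    fix i j assume "i < dim_row A" "j < dim_col A"
    then have ij: "i < n" "j < n" using c by auto
    have "A $$ (i, j) = cnj (A $$ (j, i))" using h ij by blast
    then show "mat_adjoint A $$ (i, j) = A $$ (i, j)" using c ij by (subst mat_adjoint_index) auto
  qed (use c in \<open>auto simp: mat_adjoint_index\<close>)
  then show "hermitian n A" unfolding hermitian_def using c by simp
qed

lemma qf_vec: assumes "A \<in> carrier_mat n n" shows "(A *\<^sub>v vec n f) \<bullet>c vec n f = qf n A f"
proof -
  have "(A *\<^sub>v vec n f) \<bullet>c vec n f = (\<Sum>i<n. (\<Sum>j<n. A$$(i,j) * f j) * cnj (f i))"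
    using assms unfolding scalar_prod_def
    by (auto simp: row_def scalar_prod_def lessThan_atLeast0 intro!: sum.cong)
  also have "\<dots> = qf n A f" unfolding qf_def
    by (simp add: sum_distrib_left sum_distrib_right mult.commute mult.left_commute)
  finally show ?thesis .
qed

lemma psd_qf: assumes "psd n A" shows "Im (qf n A f) = 0 \<and> 0 \<le> Re (qf n A f)"
proof -
  have c: "A \<in> carrier_mat n n" using assms unfolding psd_def hermitian_def by simp
  have all: "\<forall>v \<in> carrier_vec n. Im ((A *\<^sub>v v) \<bullet>c v) = 0 \<and> 0 \<le> Re ((A *\<^sub>v v) \<bullet>c v)"
    using assms unfolding psd_def by simp
  have "vec n f \<in> carrier_vec n" by simp
  from bspec[OF all this] show ?thesis unfolding qf_vec[OF c] .
qed

lemma psd_herm: "psd n A \<Longrightarrow> hermitian n A" unfolding psd_def by simp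

lemma psdI: assumes h: "hermitian n A" and q: "\<And>f. Im (qf n A f) = 0 \<and> 0 \<le> Re (qf n A f)"
  shows "psd n A"
proof -
  have c: "A \<in> carrier_mat n n" using h unfolding hermitian_def by simp
  have "Im ((A *\<^sub>v v) \<bullet>c v) = 0 \<and> 0 \<le> Re ((A *\<^sub>v v) \<bullet>c v)" if v: "v \<in> carrier_vec n" for v
  proof -
    have "v = vec n (\<lambda>i. v $ i)" using v by (intro eq_vecI) auto
    then have "(A *\<^sub>v v) \<bullet>c v = qf n A (\<lambda>i. v $ i)" using qf_vec[OF c, of "\<lambda>i. v $ i"] by simp
    then show ?thesis using q by simp
  qed
  then show ?thesis unfolding psd_def using h by simp
qed

lemma idx_bound: "k < m \<Longrightarrow> i < n \<Longrightarrow> k*n+i < m*(n::nat)"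
proof -
  assume a: "k < m" "i < n"
  have "k*n+i < k*n+n" using a by simp
  also have "\<dots> = Suc k * n" by simp
  also have "\<dots> \<le> m*n" using a by (intro mult_le_mono1) simp
  finally show ?thesis .
qed

lemma sum_split: fixes h :: "nat \<Rightarrow> 'a::comm_monoid_add"
  shows "(\<Sum>l<m*n. h l) = (\<Sum>k<m. \<Sum>c<n. h (k*n+c))"
proof -
  have "(\<Sum>l<m*n. h l) = (\<Sum>k<m. sum h {k*n..<k*n+n})" by (rule sum.nat_group[symmetric])
  also have "\<dots> = (\<Sum>k<m. \<Sum>c<n. h (k*n+c))"
  proof (rule sum.cong[OF refl])
    fix k
    have "sum h {0+k*n..<n+k*n} = (\<Sum>c\<in>{0..<n}. h (c + k*n))" by (rule sum.shift_bounds_nat_ivl)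
    then show "sum h {k*n..<k*n+n} = (\<Sum>c<n. h (k*n+c))"
      by (simp add: add.commute lessThan_atLeast0)
  qed
  finally show ?thesis .
qed

lemma kron_index:
  assumes "i < dim_row A * dim_row B" "j < dim_col A * dim_col B"
  shows "kron A B $$ (i,j) = A $$ (i div dim_row B, j div dim_col B) * B $$ (i mod dim_row B, j mod dim_col B)"
  using assms unfolding kron_def by simp

lemma kron_dims[simp]: "dim_row (kron A B) = dim_row A * dim_row B" "dim_col (kron A B) = dim_col A * dim_col B"
  unfolding kron_def by simp_all

lemma ptrace_dims[simp]: "dim_row (ptrace_fst m n X) = n" "dim_col (ptrace_fst m n X) = n"
  "ptrace_fst m n X \<in> carrier_mat n n"
  unfolding ptrace_fst_def by simp_all

lemma ptrace_index: "i < n \<Longrightarrow> j < n \<Longrightarrow> ptrace_fst m n X $$ (i,j) = (\<Sum>k<m. X $$ (k*n+i, k*n+j))"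
  unfolding ptrace_fst_def by simp

lemma ptrace_kron:
  assumes T: "T \<in> carrier_mat m m" and X: "X \<in> carrier_mat (m*n) (m*n)" and i: "i < n" and j: "j < n"
  shows "ptrace_fst m n (kron T (1\<^sub>m n) * X) $$ (i,j) = (\<Sum>k<m. \<Sum>k'<m. T$$(k,k') * X$$(k'*n+i, k*n+j))"
proof -
  have "ptrace_fst m n (kron T (1\<^sub>m n) * X) $$ (i,j) = (\<Sum>k<m. (kron T (1\<^sub>m n) * X) $$ (k*n+i, k*n+j))"
    using i j by (rule ptrace_index)
  also have "\<dots> = (\<Sum>k<m. \<Sum>k'<m. T$$(k,k') * X$$(k'*n+i, k*n+j))"
  proof (rule sum.cong[OF refl])
    fix k assume k: "k \<in> {..<m}"
    have kn: "k*n+i < m*n" "k*n+j < m*n" using k i j idx_bound by auto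
    have "(kron T (1\<^sub>m n) * X) $$ (k*n+i, k*n+j) = (\<Sum>l<m*n. kron T (1\<^sub>m n) $$ (k*n+i, l) * X $$ (l, k*n+j))"
      using kn T X by (simp add: scalar_prod_def lessThan_atLeast0)
    also have "\<dots> = (\<Sum>k'<m. \<Sum>c<n. kron T (1\<^sub>m n) $$ (k*n+i, k'*n+c) * X $$ (k'*n+c, k*n+j))"
      by (rule sum_split)
    also have "\<dots> = (\<Sum>k'<m. T$$(k,k') * X$$(k'*n+i, k*n+j))"
    proof (rule sum.cong[OF refl])
      fix k' assume k': "k' \<in> {..<m}"
      have "(\<Sum>c<n. kron T (1\<^sub>m n) $$ (k*n+i, k'*n+c) * X $$ (k'*n+c, k*n+j))
          = (\<Sum>c<n. (if c = i then T$$(k,k') * X$$(k'*n+i, k*n+j) else 0))"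
      proof (rule sum.cong[OF refl])
        fix c assume c: "c \<in> {..<n}"
        have "k'*n+c < m*n" using k' c idx_bound by auto
        then show "kron T (1\<^sub>m n) $$ (k*n+i, k'*n+c) * X $$ (k'*n+c, k*n+j) =
             (if c = i then T$$(k,k') * X$$(k'*n+i, k*n+j) else 0)"
          using kn T c i by (simp add: kron_index)
      qed
      also have "\<dots> = T$$(k,k') * X$$(k'*n+i, k*n+j)" using i by simp
      finally show "(\<Sum>c<n. kron T (1\<^sub>m n) $$ (k*n+i, k'*n+c) * X $$ (k'*n+c, k*n+j))
          = T$$(k,k') * X$$(k'*n+i, k*n+j)" .
    qed
    finally show "(kron T (1\<^sub>m n) * X) $$ (k*n+i, k*n+j) = (\<Sum>k'<m. T$$(k,k') * X$$(k'*n+i, k*n+j))" .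
  qed
  finally show ?thesis .
qed

lemma digit_eq: assumes "a < (d::nat)" "a' < d" shows "(a + d*b = a' + d*b') = (a = a' \<and> b = b')"
proof
  assume e: "a + d*b = a' + d*b'"
  have "(a + d*b) mod d = a" "(a' + d*b') mod d = a'" "(a + d*b) div d = b" "(a' + d*b') div d = b'"
    using assms by auto
  then show "a = a' \<and> b = b'" using e by metis
qed simp

lemma kron_kron_one:
  assumes M: "M \<in> carrier_mat m m"
  shows "kron (kron M (1\<^sub>m 2)) (1\<^sub>m d) = kron M (1\<^sub>m (2*d))"
proof (rule eq_matI)
  fix I J assume I: "I < dim_row (kron M (1\<^sub>m (2*d)))" and J: "J < dim_col (kron M (1\<^sub>m (2*d)))"
  then have I': "I < m*2*d" and J': "J < m*2*d" using M by auto
  then have d: "d > 0" by (cases d) auto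
  have a1: "I div d < m*2" "J div d < m*2" using I' J' d
    by (simp_all add: div_less_iff_less_mult mult.commute mult.left_commute)
  have "kron (kron M (1\<^sub>m 2)) (1\<^sub>m d) $$ (I,J) =
        kron M (1\<^sub>m 2) $$ (I div d, J div d) * 1\<^sub>m d $$ (I mod d, J mod d)"
    using I' J' M by (subst kron_index) (auto simp: mult.assoc)
  also have "\<dots> = M $$ (I div d div 2, J div d div 2) * 1\<^sub>m 2 $$ (I div d mod 2, J div d mod 2)
        * 1\<^sub>m d $$ (I mod d, J mod d)"
    using a1 M by (subst kron_index) auto
  also have "\<dots> = M $$ (I div (2*d), J div (2*d)) *
       (if I div d mod 2 = J div d mod 2 \<and> I mod d = J mod d then 1 else 0)"
    using d by (simp add: div_mult2_eq mult.commute)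
  also have "\<dots> = M $$ (I div (2*d), J div (2*d)) * 1\<^sub>m (2*d) $$ (I mod (2*d), J mod (2*d))"
  proof -
    have "(I mod (2*d) = J mod (2*d)) = (I div d mod 2 = J div d mod 2 \<and> I mod d = J mod d)"
      using digit_eq[of "I mod d" d "J mod d" "I div d mod 2" "J div d mod 2"] d
      by (simp add: mod_mult2_eq mult.commute conj_commute add.commute)
    then show ?thesis using d by simp
  qed
  also have "\<dots> = kron M (1\<^sub>m (2*d)) $$ (I,J)"
    using I' J' M by (subst kron_index) (auto simp: mult.assoc)
  finally show "kron (kron M (1\<^sub>m 2)) (1\<^sub>m d) $$ (I,J) = kron M (1\<^sub>m (2*d)) $$ (I,J)" .
qed (use M in auto)

lemma sigma_entry:
  assumes M: "M \<in> carrier_mat 2 2" and Q: "Q \<in> carrier_mat 2 2"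
    and R: "R \<in> carrier_mat (2*2*d) (2*2*d)" and i: "i < d" and j: "j < d"
  shows "ptrace_fst (2*2) d (kron (kron M Q) (1\<^sub>m d) * R) $$ (i,j) =
    (\<Sum>\<alpha><2. \<Sum>\<beta><2. \<Sum>\<alpha>'<2. \<Sum>\<beta>'<2. M$$(\<alpha>,\<alpha>') * Q$$(\<beta>,\<beta>') * R$$(\<alpha>'*(2*d)+(\<beta>'*d+i), \<alpha>*(2*d)+(\<beta>*d+j)))"
proof -
  have T: "kron M Q \<in> carrier_mat (2*2) (2*2)" using M Q by auto
  have "ptrace_fst (2*2) d (kron (kron M Q) (1\<^sub>m d) * R) $$ (i,j) =
     (\<Sum>k<2*2. \<Sum>k'<2*2. kron M Q $$(k,k') * R$$(k'*d+i, k*d+j))"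
    by (rule ptrace_kron[OF T R i j])
  also have "\<dots> = (\<Sum>\<alpha><2. \<Sum>\<beta><2. \<Sum>k'<2*2. kron M Q $$(\<alpha>*2+\<beta>,k') * R$$(k'*d+i, (\<alpha>*2+\<beta>)*d+j))"
    by (rule sum_split)
  also have "\<dots> = (\<Sum>\<alpha><2. \<Sum>\<beta><2. \<Sum>\<alpha>'<2. \<Sum>\<beta>'<2. kron M Q $$(\<alpha>*2+\<beta>,\<alpha>'*2+\<beta>') * R$$((\<alpha>'*2+\<beta>')*d+i, (\<alpha>*2+\<beta>)*d+j))"
    by (subst sum_split) simp
  also have "\<dots> = (\<Sum>\<alpha><2. \<Sum>\<beta><2. \<Sum>\<alpha>'<2. \<Sum>\<beta>'<2. M$$(\<alpha>,\<alpha>') * Q$$(\<beta>,\<beta>') * R$$(\<alpha>'*(2*d)+(\<beta>'*d+i), \<alpha>*(2*d)+(\<beta>*d+j)))"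
  proof (intro sum.cong refl)
    fix \<alpha> \<beta> \<alpha>' \<beta>' :: nat assume a: "\<alpha> \<in> {..<2}" "\<beta> \<in> {..<2}" "\<alpha>' \<in> {..<2}" "\<beta>' \<in> {..<2}"
    have k1: "\<alpha>*2+\<beta> < 2*2" "\<alpha>'*2+\<beta>' < 2*2" using a idx_bound[of \<alpha> 2 \<beta> 2] idx_bound[of \<alpha>' 2 \<beta>' 2] by auto
    have "kron M Q $$(\<alpha>*2+\<beta>,\<alpha>'*2+\<beta>') = M$$(\<alpha>,\<alpha>') * Q$$(\<beta>,\<beta>')"
      using k1 M Q a by (subst kron_index) auto
    moreover have "(\<alpha>'*2+\<beta>')*d+i = \<alpha>'*(2*d)+(\<beta>'*d+i)" "(\<alpha>*2+\<beta>)*d+j = \<alpha>*(2*d)+(\<beta>*d+j)"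
      by (simp_all add: algebra_simps)
    ultimately show "kron M Q $$(\<alpha>*2+\<beta>,\<alpha>'*2+\<beta>') * R$$((\<alpha>'*2+\<beta>')*d+i, (\<alpha>*2+\<beta>)*d+j) =
        M$$(\<alpha>,\<alpha>') * Q$$(\<beta>,\<beta>') * R$$(\<alpha>'*(2*d)+(\<beta>'*d+i), \<alpha>*(2*d)+(\<beta>*d+j))" by (simp only:)
  qed
  finally show ?thesis .
qed

lemma rhoa_entry:
  assumes M: "M \<in> carrier_mat 2 2"
    and R: "R \<in> carrier_mat (2*2*d) (2*2*d)" and i: "i < 2*d" and j: "j < 2*d"
  shows "ptrace_fst 2 (2*d) (kron (kron M (1\<^sub>m 2)) (1\<^sub>m d) * R) $$ (i,j) =
    (\<Sum>\<alpha><2. \<Sum>\<alpha>'<2. M$$(\<alpha>,\<alpha>') * R$$(\<alpha>'*(2*d)+i, \<alpha>*(2*d)+j))"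
proof -
  have R': "R \<in> carrier_mat (2*(2*d)) (2*(2*d))" using R by (simp add: mult.assoc)
  show ?thesis unfolding kron_kron_one[OF M] by (rule ptrace_kron[OF M R' i j])
qed

definition mv :: "nat \<Rightarrow> complex mat \<Rightarrow> (nat \<Rightarrow> complex) \<Rightarrow> nat \<Rightarrow> complex" where
  "mv n A v i = (\<Sum>j<n. A$$(i,j) * v j)"

definition ipc :: "nat \<Rightarrow> (nat \<Rightarrow> complex) \<Rightarrow> (nat \<Rightarrow> complex) \<Rightarrow> complex" where
  "ipc n x v = (\<Sum>j<n. cnj (x j) * v j)"

lemma qf_expand:
  "qf n A (\<lambda>k. v k + c * u k) = qf n A v + c * (\<Sum>i<n. \<Sum>j<n. cnj (v i) * A$$(i,j) * u j)
     + cnj c * (\<Sum>i<n. \<Sum>j<n. cnj (u i) * A$$(i,j) * v j) + cnj c * c * qf n A u"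
  unfolding qf_def by (simp add: sum.distrib sum_distrib_left algebra_simps)

lemma cross1: "(\<Sum>i<n. \<Sum>j<n. cnj (u i) * A$$(i,j) * v j) = (\<Sum>i<n. cnj (u i) * mv n A v i)"
  unfolding mv_def by (simp add: sum_distrib_left algebra_simps)

lemma cross2: assumes h: "hermitian n A"
  shows "(\<Sum>i<n. \<Sum>j<n. cnj (v i) * A$$(i,j) * u j) = cnj (\<Sum>i<n. \<Sum>j<n. cnj (u i) * A$$(i,j) * v j)"
proof -
  have e: "\<And>i j. i<n \<Longrightarrow> j<n \<Longrightarrow> A$$(i,j) = cnj (A$$(j,i))" using h unfolding hermitian_iff by blast
  have "cnj (\<Sum>i<n. \<Sum>j<n. cnj (u i) * A$$(i,j) * v j) = (\<Sum>i<n. \<Sum>j<n. u i * cnj (A$$(i,j)) * cnj (v j))"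
    by simp
  also have "\<dots> = (\<Sum>i<n. \<Sum>j<n. u i * A$$(j,i) * cnj (v j))"
  proof (intro sum.cong refl)
    fix i j assume "i \<in> {..<n}" "j \<in> {..<n}"
    then have "A$$(j,i) = cnj (A$$(i,j))" using e[of j i] by simp
    then show "u i * cnj (A$$(i,j)) * cnj (v j) = u i * A$$(j,i) * cnj (v j)" by simp
  qed
  also have "\<dots> = (\<Sum>j<n. \<Sum>i<n. u i * A$$(j,i) * cnj (v j))" by (rule sum.swap)
  also have "\<dots> = (\<Sum>i<n. \<Sum>j<n. cnj (v i) * A$$(i,j) * u j)"
    by (simp add: mult.commute mult.left_commute)
  finally show ?thesis by simp
qed

lemma sum_cnj_self: "(\<Sum>i<n. cnj (u i) * u i) = complex_of_real (\<Sum>i<n. (cmod (u i))^2)"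
proof -
  have "complex_of_real (\<Sum>i<n. (cmod (u i))^2) = (\<Sum>i<n. complex_of_real ((cmod (u i))^2))"
    by (rule of_real_sum)
  also have "\<dots> = (\<Sum>i<n. cnj (u i) * u i)"
    by (intro sum.cong refl) (metis complex_norm_square mult.commute)
  finally show ?thesis by simp
qed

lemma L_ker:
  assumes p: "psd n A" and z: "qf n A v = 0"
  shows "mv n A v i = 0 \<or> i \<ge> n"
proof -
  let ?u = "mv n A v"
  have h: "hermitian n A" using p psd_herm by blast
  define nr where "nr = (\<Sum>i<n. (cmod (?u i))^2)"
  define m where "m = Re (qf n A ?u)"
  have m0: "m \<ge> 0" using psd_qf[OF p] m_def by blast
  have X: "(\<Sum>i<n. \<Sum>j<n. cnj (?u i) * A$$(i,j) * v j) = complex_of_real nr"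
    unfolding cross1 nr_def by (rule sum_cnj_self)
  have Y: "(\<Sum>i<n. \<Sum>j<n. cnj (v i) * A$$(i,j) * ?u j) = complex_of_real nr"
    using cross2[OF h, where v=v and u="?u"] X by simp
  have key: "0 \<le> 2*t*nr + t^2 * m" for t :: real
  proof -
    have "qf n A (\<lambda>k. v k + complex_of_real t * ?u k) =
       complex_of_real t * complex_of_real nr + complex_of_real t * complex_of_real nr
         + complex_of_real t * complex_of_real t * qf n A ?u"
      unfolding qf_expand X Y z by simp
    then have "Re (qf n A (\<lambda>k. v k + complex_of_real t * ?u k)) = 2*t*nr + t^2 * m"
      unfolding m_def by (simp add: power2_eq_square)
    then show ?thesis using psd_qf[OF p] by metis
  qed
  have "nr = 0"
  proof (rule ccontr)
    assume "nr \<noteq> 0"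
    then have nrp: "nr > 0" unfolding nr_def by (simp add: sum_nonneg order_le_neq_trans)
    define t where "t = - nr / (1 + m)"
    have pm: "1 + m > 0" using m0 by linarith
    have e1: "t^2*(1+m) = nr^2/(1+m)" unfolding t_def using pm by (simp add: power2_eq_square)
    have e2: "2*t*nr = -2*(nr^2/(1+m))" unfolding t_def using pm by (simp add: power2_eq_square)
    have "t^2 * m \<le> t^2*(1+m)" by (intro mult_left_mono) auto
    then have "2*t*nr + t^2 * m \<le> -(nr^2/(1+m))" using e1 e2 by linarith
    also have "\<dots> < 0" using nrp pm by simp
    finally show False using key[of t] by simp
  qed
  then have "\<forall>i<n. (cmod (?u i))^2 = 0" unfolding nr_def
    by (subst (asm) sum_nonneg_eq_0_iff) auto
  then show ?thesis by force
qed

lemma ipc_self: "ipc n u u = complex_of_real (\<Sum>i<n. (cmod (u i))^2)"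
  unfolding ipc_def by (rule sum_cnj_self)

lemma ipc_zero: assumes "ipc n u u = 0" shows "\<forall>i<n. u i = 0"
proof -
  have "complex_of_real (\<Sum>i<n. (cmod (u i))^2) = 0" using assms ipc_self[of n u] by metis
  then have "(\<Sum>i<n. (cmod (u i))^2) = 0" by (simp only: of_real_eq_0_iff)
  then have "\<forall>i<n. (cmod (u i))^2 = 0" by (subst (asm) sum_nonneg_eq_0_iff) auto
  then show ?thesis by simp
qed

lemma ipc_lin: "ipc n x (\<lambda>k. a * u k + b * w k) = a * ipc n x u + b * ipc n x w"
  unfolding ipc_def by (simp add: sum.distrib sum_distrib_left algebra_simps)

lemma ipc_clin: "ipc n (\<lambda>k. a * u k + b * w k) x = cnj a * ipc n u x + cnj b * ipc n w x"
  unfolding ipc_def by (simp add: sum.distrib sum_distrib_left algebra_simps)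

definition indep2 :: "nat \<Rightarrow> (nat \<Rightarrow> complex) \<Rightarrow> (nat \<Rightarrow> complex) \<Rightarrow> bool" where
  "indep2 n x1 x2 \<longleftrightarrow> (\<forall>a b. (\<forall>i<n. a * x1 i + b * x2 i = 0) \<longrightarrow> a = 0 \<and> b = 0)"

lemma L_span:
  assumes ind: "indep2 n x1 x2"
  shows "\<exists>y. ipc n x2 y = 0 \<and> ipc n x1 y \<noteq> 0"
proof -
  define N where "N = ipc n x2 x2"
  define z where "z = ipc n x2 x1"
  define y where "y = (\<lambda>k. N * x1 k + (-z) * x2 k)"
  have y2: "ipc n x2 y = 0" unfolding y_def ipc_lin N_def z_def by simp
  have N0: "N \<noteq> 0"
  proof
    assume "N = 0"
    then have "ipc n x2 x2 = 0" using N_def by simp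
    then have "\<forall>i<n. x2 i = 0" by (rule ipc_zero)
    then have "\<forall>i<n. 0 * x1 i + 1 * x2 i = 0" by simp
    then show False using ind unfolding indep2_def by (metis one_neq_zero)
  qed
  have "ipc n x1 y \<noteq> 0"
  proof
    assume y1: "ipc n x1 y = 0"
    have "ipc n y y = cnj N * ipc n x1 y + cnj (-z) * ipc n x2 y"
      unfolding y_def by (rule ipc_clin)
    then have "ipc n y y = 0" using y1 y2 unfolding y_def by simp
    then have "\<forall>i<n. y i = 0" by (rule ipc_zero)
    then have "\<forall>i<n. N * x1 i + (-z) * x2 i = 0" unfolding y_def by simp
    then have "N = 0" using ind unfolding indep2_def by blast
    then show False using N0 by simp
  qed
  then show ?thesis using y2 by blast
qed

lemma edge_core:
  assumes p: "psd n r" and ind: "indep2 n x1 x2"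
    and h1: "\<And>v. ipc n x1 v = 0 \<Longrightarrow> qf n r v = 0"
    and h2: "\<And>v. ipc n x2 v = 0 \<Longrightarrow> qf n r v = 0"
    and i: "i < n"
  shows "r $$ (i,i) = 0"
proof -
  obtain y where y2: "ipc n x2 y = 0" and y1: "ipc n x1 y \<noteq> 0" using L_span[OF ind] by blast
  define u where "u = (\<lambda>j. if j = i then (1::complex) else 0)"
  define a where "a = ipc n x1 u / ipc n x1 y"
  define u' where "u' = (\<lambda>k. 1 * u k + (-a) * y k)"
  have "ipc n x1 u' = ipc n x1 u - a * ipc n x1 y" unfolding u'_def ipc_lin by simp
  also have "\<dots> = 0" unfolding a_def using y1 by simp
  finally have "qf n r u' = 0" by (rule h1)
  then have m1: "mv n r u' i = 0" using L_ker[OF p] i by force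
  have m2: "mv n r y i = 0" using L_ker[OF p h2[OF y2]] i by force
  have "mv n r u' i = mv n r u i - a * mv n r y i"
    unfolding mv_def u'_def by (simp add: sum.distrib sum_distrib_left algebra_simps sum_subtractf)
  then have "mv n r u i = 0" using m1 m2 by simp
  moreover have "mv n r u i = r $$ (i,i)" unfolding mv_def u_def using i by (simp add: if_distrib cong: if_cong)
  ultimately show ?thesis by simp
qed

lemma compress_psd:
  assumes A: "psd N A" and B: "B \<in> carrier_mat m m"
    and Bdef: "\<And>a' a. a' < m \<Longrightarrow> a < m \<Longrightarrow> B $$ (a',a) = (\<Sum>l<N. \<Sum>l'<N. cnj (V l a') * A$$(l,l') * V l' a)"
  shows "psd m B"
proof (rule psdI)
  have e: "\<And>i j. i<N \<Longrightarrow> j<N \<Longrightarrow> A$$(i,j) = cnj (A$$(j,i))" using psd_herm[OF A] unfolding hermitian_iff by blast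
  show "hermitian m B" unfolding hermitian_iff
  proof (intro conjI allI impI B)
    fix a' a assume a: "a' < m" "a < m"
    have "cnj (B $$ (a,a')) = (\<Sum>l<N. \<Sum>l'<N. V l a * cnj (A$$(l,l')) * cnj (V l' a'))"
      using a by (simp add: Bdef)
    also have "\<dots> = (\<Sum>l<N. \<Sum>l'<N. V l a * A$$(l',l) * cnj (V l' a'))"
    proof (intro sum.cong refl)
      fix l l' assume "l \<in> {..<N}" "l' \<in> {..<N}"
      then have "A$$(l',l) = cnj (A$$(l,l'))" using e[of l' l] by simp
      then show "V l a * cnj (A$$(l,l')) * cnj (V l' a') = V l a * A$$(l',l) * cnj (V l' a')" by simp
    qed
    also have "\<dots> = (\<Sum>l'<N. \<Sum>l<N. V l a * A$$(l',l) * cnj (V l' a'))" by (rule sum.swap)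
    also have "\<dots> = B $$ (a',a)" using a by (simp add: Bdef mult.commute mult.left_commute)
    finally show "B $$ (a',a) = cnj (B $$ (a,a'))" by simp
  qed
  fix g
  have "qf m B g = qf N A (\<lambda>l. \<Sum>a<m. V l a * g a)"
  proof -
    have "qf m B g = (\<Sum>a'<m. \<Sum>a<m. \<Sum>l<N. \<Sum>l'<N. cnj (g a') * cnj (V l a') * A$$(l,l') * V l' a * g a)"
      unfolding qf_def by (simp add: Bdef sum_distrib_left sum_distrib_right mult.assoc)
    also have "\<dots> = (\<Sum>a'<m. \<Sum>l<N. \<Sum>a<m. \<Sum>l'<N. cnj (g a') * cnj (V l a') * A$$(l,l') * V l' a * g a)"
      by (rule sum.cong[OF refl], rule sum.swap)
    also have "\<dots> = (\<Sum>l<N. \<Sum>a'<m. \<Sum>a<m. \<Sum>l'<N. cnj (g a') * cnj (V l a') * A$$(l,l') * V l' a * g a)"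
      by (rule sum.swap)
    also have "\<dots> = (\<Sum>l<N. \<Sum>a'<m. \<Sum>l'<N. \<Sum>a<m. cnj (g a') * cnj (V l a') * A$$(l,l') * V l' a * g a)"
      by (rule sum.cong[OF refl], rule sum.cong[OF refl], rule sum.swap)
    also have "\<dots> = (\<Sum>l<N. \<Sum>l'<N. \<Sum>a'<m. \<Sum>a<m. cnj (g a') * cnj (V l a') * A$$(l,l') * V l' a * g a)"
      by (rule sum.cong[OF refl], rule sum.swap)
    also have "\<dots> = qf N A (\<lambda>l. \<Sum>a<m. V l a * g a)"
      unfolding qf_def by (simp add: sum_distrib_left sum_distrib_right mult.assoc mult.commute mult.left_commute)
    finally show ?thesis .
  qed
  then show "Im (qf m B g) = 0 \<and> 0 \<le> Re (qf m B g)" using psd_qf[OF A] by simp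
qed

lemma sum_sel:
  fixes h :: "nat \<Rightarrow> 'a::comm_monoid_add"
  assumes k: "k < m"
  shows "(\<Sum>l<m*n. if l div n = k then h l else 0) = (\<Sum>i<n. h (k*n+i))"
proof (cases "n = 0")
  case True then show ?thesis by simp
next
  case False
  have "(\<Sum>l<m*n. if l div n = k then h l else 0) = (\<Sum>k1<m. \<Sum>i<n. if (k1*n+i) div n = k then h (k1*n+i) else 0)"
    by (rule sum_split)
  also have "\<dots> = (\<Sum>k1<m. if k1 = k then (\<Sum>i<n. h (k1*n+i)) else 0)"
  proof (intro sum.cong refl)
    fix k1 assume "k1 \<in> {..<m}"
    have "\<And>i. i \<in> {..<n} \<Longrightarrow> (k1*n+i) div n = k1" using False by simp
    then show "(\<Sum>i<n. if (k1*n+i) div n = k then h (k1*n+i) else 0) = (if k1 = k then (\<Sum>i<n. h (k1*n+i)) else 0)"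
      by (auto intro!: sum.neutral)
  qed
  also have "\<dots> = (\<Sum>i<n. h (k*n+i))" using k by (simp add: sum.delta)
  finally show ?thesis .
qed

definition Rv :: "nat \<Rightarrow> nat \<Rightarrow> complex mat \<Rightarrow> (nat \<Rightarrow> complex) \<Rightarrow> complex mat" where
  "Rv m d X v = mat m m (\<lambda>(k',k). \<Sum>i<d. \<Sum>j<d. cnj (v i) * X$$(k'*d+i, k*d+j) * v j)"

lemma Rv_psd: assumes X: "psd (m*d) X" shows "psd m (Rv m d X v)"
proof (rule compress_psd[OF X, where V = "\<lambda>l k. if l div d = k then v (l mod d) else 0"])
  show "Rv m d X v \<in> carrier_mat m m" unfolding Rv_def by simp
  fix a' a assume a: "a' < m" "a < m"
  have "(\<Sum>l<m*d. \<Sum>l'<m*d. cnj (if l div d = a' then v (l mod d) else 0) * X$$(l,l') * (if l' div d = a then v (l' mod d) else 0))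
     = (\<Sum>l<m*d. if l div d = a' then (\<Sum>l'<m*d. if l' div d = a then cnj (v (l mod d)) * X$$(l,l') * v (l' mod d) else 0) else 0)"
  proof (rule sum.cong[OF refl])
    fix l assume "l \<in> {..<m*d}"
    show "(\<Sum>l'<m*d. cnj (if l div d = a' then v (l mod d) else 0) * X$$(l,l') * (if l' div d = a then v (l' mod d) else 0))
      = (if l div d = a' then (\<Sum>l'<m*d. if l' div d = a then cnj (v (l mod d)) * X$$(l,l') * v (l' mod d) else 0) else 0)"
    proof (cases "l div d = a'")
      case True
      then show ?thesis by (simp add: if_distrib cong: if_cong)
    qed simp
  qed
  also have "\<dots> = (\<Sum>i<d. \<Sum>l'<m*d. if l' div d = a then cnj (v ((a'*d+i) mod d)) * X$$(a'*d+i,l') * v (l' mod d) else 0)"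
    by (rule sum_sel[OF a(1)])
  also have "\<dots> = (\<Sum>i<d. \<Sum>j<d. cnj (v ((a'*d+i) mod d)) * X$$(a'*d+i,a*d+j) * v ((a*d+j) mod d))"
    by (intro sum.cong refl sum_sel[OF a(2)])
  also have "\<dots> = (\<Sum>i<d. \<Sum>j<d. cnj (v i) * X$$(a'*d+i,a*d+j) * v j)"
    by (intro sum.cong refl) simp
  also have "\<dots> = Rv m d X v $$ (a',a)" unfolding Rv_def using a by simp
  finally show "Rv m d X v $$ (a',a) = (\<Sum>l<m*d. \<Sum>l'<m*d. cnj (if l div d = a' then v (l mod d) else 0) * X$$(l,l') * (if l' div d = a then v (l' mod d) else 0))"
    by simp
qed

lemma qf_ptrace:
  assumes T: "T \<in> carrier_mat m m" and X: "X \<in> carrier_mat (m*d) (m*d)"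
  shows "qf d (ptrace_fst m d (kron T (1\<^sub>m d) * X)) v = (\<Sum>k<m. \<Sum>k'<m. T$$(k,k') * Rv m d X v $$ (k',k))"
proof -
  have "qf d (ptrace_fst m d (kron T (1\<^sub>m d) * X)) v =
      (\<Sum>i<d. \<Sum>j<d. cnj (v i) * (\<Sum>k<m. \<Sum>k'<m. T$$(k,k') * X$$(k'*d+i, k*d+j)) * v j)"
    unfolding qf_def by (intro sum.cong refl) (simp add: ptrace_kron[OF T X])
  also have "\<dots> = (\<Sum>i<d. \<Sum>j<d. \<Sum>k<m. \<Sum>k'<m. T$$(k,k') * (cnj (v i) * X$$(k'*d+i, k*d+j) * v j))"
    by (simp add: sum_distrib_left sum_distrib_right mult.commute mult.left_commute)
  also have "\<dots> = (\<Sum>i<d. \<Sum>k<m. \<Sum>j<d. \<Sum>k'<m. T$$(k,k') * (cnj (v i) * X$$(k'*d+i, k*d+j) * v j))"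
    by (rule sum.cong[OF refl], rule sum.swap)
  also have "\<dots> = (\<Sum>k<m. \<Sum>i<d. \<Sum>j<d. \<Sum>k'<m. T$$(k,k') * (cnj (v i) * X$$(k'*d+i, k*d+j) * v j))"
    by (rule sum.swap)
  also have "\<dots> = (\<Sum>k<m. \<Sum>i<d. \<Sum>k'<m. \<Sum>j<d. T$$(k,k') * (cnj (v i) * X$$(k'*d+i, k*d+j) * v j))"
    by (rule sum.cong[OF refl], rule sum.cong[OF refl], rule sum.swap)
  also have "\<dots> = (\<Sum>k<m. \<Sum>k'<m. \<Sum>i<d. \<Sum>j<d. T$$(k,k') * (cnj (v i) * X$$(k'*d+i, k*d+j) * v j))"
    by (rule sum.cong[OF refl], rule sum.swap)
  also have "\<dots> = (\<Sum>k<m. \<Sum>k'<m. T$$(k,k') * Rv m d X v $$ (k',k))"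
    unfolding Rv_def by (intro sum.cong refl) (simp add: sum_distrib_left)
  finally show ?thesis .
qed

lemma qf2: "qf 2 M g = cnj (g 0) * M$$(0,0) * g 0 + cnj (g 0) * M$$(0,1) * g 1 + cnj (g 1) * M$$(1,0) * g 0 + cnj (g 1) * M$$(1,1) * g 1"
  unfolding qf_def by (simp add: numeral_2_eq_2 lessThan_Suc)

lemma real_cs_aux:
  fixes a b Z :: real
  assumes a: "a \<ge> 0" and b: "b \<ge> 0" and Z: "Z \<ge> 0" and h: "\<And>s. 0 \<le> a*Z + b*s^2 - 2*s*Z"
  shows "Z \<le> a*b"
proof (cases "a > 0")
  case True
  have "0 \<le> a*Z + b*a^2 - 2*a*Z" using h[of a] .
  then have "0 \<le> a*(a*b - Z)" by (simp add: algebra_simps power2_eq_square)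
  then show ?thesis using True by (simp add: zero_le_mult_iff)
next
  case False
  then have a0: "a = 0" using a by simp
  show ?thesis
  proof (rule ccontr)
    assume "\<not> Z \<le> a*b"
    then have Zp: "Z > 0" using a0 by simp
    define s where "s = Z/(b+1)"
    have bp: "b + 1 > 0" using b by simp
    have "0 \<le> b*s^2 - 2*s*Z" using h[of s] a0 by simp
    also have "b*s^2 - 2*s*Z = s*(b*s - 2*Z)" by (simp add: algebra_simps power2_eq_square)
    finally have "0 \<le> s*(b*s - 2*Z)" .
    moreover have "s > 0" unfolding s_def using Zp bp by simp
    ultimately have "0 \<le> b*s - 2*Z" by (simp add: zero_le_mult_iff)
    moreover have "b*s \<le> Z" unfolding s_def using bp b Zp by (simp add: field_simps)
    ultimately show False using Zp by linarith
  qed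
qed

lemma psd2_facts:
  assumes p: "psd 2 M"
  shows "M$$(0,0) = complex_of_real (Re (M$$(0,0)))" "Re (M$$(0,0)) \<ge> 0"
        "M$$(1,1) = complex_of_real (Re (M$$(1,1)))" "Re (M$$(1,1)) \<ge> 0"
        "M$$(1,0) = cnj (M$$(0,1))"
        "(cmod (M$$(0,1)))^2 \<le> Re (M$$(0,0)) * Re (M$$(1,1))"
proof -
  have h: "hermitian 2 M" using psd_herm[OF p] .
  have e: "\<And>i j. i<2 \<Longrightarrow> j<2 \<Longrightarrow> M$$(i,j) = cnj (M$$(j,i))" using h unfolding hermitian_iff by blast
  have q0: "qf 2 M (\<lambda>k. if k = 0 then 1 else 0) = M$$(0,0)" by (simp add: qf2)
  have q1: "qf 2 M (\<lambda>k. if k = 1 then 1 else 0) = M$$(1,1)" by (simp add: qf2)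
  from psd_qf[OF p, of "\<lambda>k. if k = 0 then 1 else 0"] q0
  show A: "M$$(0,0) = complex_of_real (Re (M$$(0,0)))" "Re (M$$(0,0)) \<ge> 0"
    by (simp_all add: complex_eq_iff)
  from psd_qf[OF p, of "\<lambda>k. if k = 1 then 1 else 0"] q1
  show B: "M$$(1,1) = complex_of_real (Re (M$$(1,1)))" "Re (M$$(1,1)) \<ge> 0"
    by (simp_all add: complex_eq_iff)
  show C: "M$$(1,0) = cnj (M$$(0,1))" using e[of 1 0] by simp
  define z where "z = M$$(0,1)"
  define a where "a = Re (M$$(0,0))"
  define b where "b = Re (M$$(1,1))"
  have "0 \<le> a*(cmod z)^2 + b*s^2 - 2*s*(cmod z)^2" for s
  proof -
    let ?g = "\<lambda>k::nat. if k = 0 then -z else complex_of_real s"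
    have "qf 2 M ?g = cnj (-z) * complex_of_real a * (-z) + cnj (-z) * z * complex_of_real s
        + complex_of_real s * cnj z * (-z) + complex_of_real s * complex_of_real b * complex_of_real s"
      unfolding qf2 using A B C unfolding a_def b_def z_def by simp
    also have "\<dots> = complex_of_real a * (cnj z * z) - 2 * complex_of_real s * (cnj z * z) + complex_of_real (b*s^2)"
      by (simp add: algebra_simps power2_eq_square)
    also have "\<dots> = complex_of_real (a*(cmod z)^2 + b*s^2 - 2*s*(cmod z)^2)"
    proof -
      have zz: "cnj z * z = complex_of_real ((cmod z)^2)" by (metis complex_norm_square mult.commute)
      show ?thesis unfolding zz by simp
    qed
    finally show ?thesis using psd_qf[OF p, of ?g] by simp
  qed
  then show "(cmod (M$$(0,1)))^2 \<le> Re (M$$(0,0)) * Re (M$$(1,1))"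
    using real_cs_aux[of a b "(cmod z)^2"] A(2) B(2) unfolding a_def b_def z_def by simp
qed

lemma tr22:
  assumes pM: "psd 2 M" and pR: "psd 2 R"
  shows "Im (\<Sum>a<2. \<Sum>a'<2. M$$(a,a') * R$$(a',a)) = 0 \<and> 0 \<le> Re (\<Sum>a<2. \<Sum>a'<2. M$$(a,a') * R$$(a',a))"
proof -
  note m = psd2_facts[OF pM] and r = psd2_facts[OF pR]
  define z where "z = M$$(0,1)"
  define w where "w = R$$(0,1)"
  define a where "a = Re (M$$(0,0))"
  define b where "b = Re (M$$(1,1))"
  define ra where "ra = Re (R$$(0,0))"
  define rb where "rb = Re (R$$(1,1))"
  have s: "(\<Sum>a<2. \<Sum>a'<2. M$$(a,a') * R$$(a',a)) =
     complex_of_real (a*ra + b*rb) + (z * cnj w + cnj (z * cnj w))"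
  proof -
    have "(\<Sum>a<2. \<Sum>a'<2. M$$(a,a') * R$$(a',a)) = M$$(0,0)*R$$(0,0) + M$$(0,1)*R$$(1,0) + M$$(1,0)*R$$(0,1) + M$$(1,1)*R$$(1,1)"
      by (simp add: numeral_2_eq_2 lessThan_Suc)
    also have "\<dots> = complex_of_real a * complex_of_real ra + z * cnj w + cnj z * w + complex_of_real b * complex_of_real rb"
      unfolding a_def b_def ra_def rb_def z_def w_def using m(1,3,5) r(1,3,5) by metis
    finally show ?thesis by (simp add: algebra_simps)
  qed
  have im: "Im (\<Sum>a<2. \<Sum>a'<2. M$$(a,a') * R$$(a',a)) = 0" unfolding s by simp
  have re: "Re (\<Sum>a<2. \<Sum>a'<2. M$$(a,a') * R$$(a',a)) = a*ra + b*rb + 2 * Re (z * cnj w)" unfolding s by simp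
  have X: "a*ra \<ge> 0" "b*rb \<ge> 0" using m r unfolding a_def b_def ra_def rb_def by simp_all
  have P: "(cmod z * cmod w)^2 \<le> (a*ra) * (b*rb)"
  proof -
    have "(cmod z)^2 \<le> a*b" "(cmod w)^2 \<le> ra*rb" using m(6) r(6) unfolding a_def b_def ra_def rb_def z_def w_def by simp_all
    moreover have "0 \<le> (cmod z)^2" "0 \<le> (cmod w)^2" by simp_all
    moreover have "0 \<le> a*b" using m(2) m(4) unfolding a_def b_def by simp
    ultimately have "(cmod z)^2 * (cmod w)^2 \<le> (a*b)*(ra*rb)" by (intro mult_mono) auto
    then show ?thesis by (simp add: power_mult_distrib algebra_simps)
  qed
  have R: "- (cmod z * cmod w) \<le> Re (z * cnj w)"
  proof -
    have "\<bar>Re (z * cnj w)\<bar> \<le> cmod (z * cnj w)" by (rule abs_Re_le_cmod)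
    then show ?thesis by (simp add: norm_mult)
  qed
  have "2 * (cmod z * cmod w) \<le> a*ra + b*rb"
  proof (rule ccontr)
    assume "\<not> ?thesis"
    then have lt: "a*ra + b*rb < 2 * (cmod z * cmod w)" by simp
    have "(a*ra + b*rb)^2 < (2 * (cmod z * cmod w))^2"
      using lt X by (intro power_strict_mono) auto
    moreover have "(a*ra - b*rb)^2 \<ge> 0" by simp
    ultimately show False using P by (simp add: power2_eq_square algebra_simps)
  qed
  then show ?thesis using im re R by simp
qed

lemma herm_ptrace:
  assumes T: "hermitian m T" and X: "hermitian (m*d) X"
  shows "hermitian d (ptrace_fst m d (kron T (1\<^sub>m d) * X))"
  unfolding hermitian_iff
proof (intro conjI allI impI)
  show "ptrace_fst m d (kron T (1\<^sub>m d) * X) \<in> carrier_mat d d" by simp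
  have Tc: "T \<in> carrier_mat m m" and Xc: "X \<in> carrier_mat (m*d) (m*d)"
    using T X unfolding hermitian_iff by auto
  have eT: "\<And>i j. i<m \<Longrightarrow> j<m \<Longrightarrow> T$$(i,j) = cnj (T$$(j,i))" using T unfolding hermitian_iff by blast
  have eX: "\<And>i j. i<m*d \<Longrightarrow> j<m*d \<Longrightarrow> X$$(i,j) = cnj (X$$(j,i))" using X unfolding hermitian_iff by blast
  fix i j assume i: "i < d" and j: "j < d"
  have "cnj (ptrace_fst m d (kron T (1\<^sub>m d) * X) $$ (j,i)) = (\<Sum>k<m. \<Sum>k'<m. cnj (T$$(k,k')) * cnj (X$$(k'*d+j, k*d+i)))"
    by (simp add: ptrace_kron[OF Tc Xc j i])
  also have "\<dots> = (\<Sum>k<m. \<Sum>k'<m. T$$(k',k) * X$$(k*d+i, k'*d+j))"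
  proof (intro sum.cong refl)
    fix k k' assume k: "k \<in> {..<m}" "k' \<in> {..<m}"
    have "T$$(k',k) = cnj (T$$(k,k'))" using eT[of k' k] k by simp
    moreover have "X$$(k*d+i, k'*d+j) = cnj (X$$(k'*d+j, k*d+i))"
      using eX[of "k*d+i" "k'*d+j"] k i j idx_bound by simp
    ultimately show "cnj (T$$(k,k')) * cnj (X$$(k'*d+j, k*d+i)) = T$$(k',k) * X$$(k*d+i, k'*d+j)" by simp
  qed
  also have "\<dots> = (\<Sum>k'<m. \<Sum>k<m. T$$(k',k) * X$$(k*d+i, k'*d+j))" by (rule sum.swap)
  also have "\<dots> = ptrace_fst m d (kron T (1\<^sub>m d) * X) $$ (i,j)"
    by (simp add: ptrace_kron[OF Tc Xc i j])
  finally show "ptrace_fst m d (kron T (1\<^sub>m d) * X) $$ (i,j) = cnj (ptrace_fst m d (kron T (1\<^sub>m d) * X) $$ (j,i))" by simp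
qed

lemma kron_herm:
  assumes M: "hermitian 2 M" and Q: "hermitian 2 Q"
  shows "hermitian (2*2) (kron M Q)"
  unfolding hermitian_iff
proof (intro conjI allI impI)
  have Mc: "M \<in> carrier_mat 2 2" and Qc: "Q \<in> carrier_mat 2 2" using M Q unfolding hermitian_iff by auto
  then show "kron M Q \<in> carrier_mat (2*2) (2*2)" by auto
  have eM: "\<And>i j. i<2 \<Longrightarrow> j<2 \<Longrightarrow> M$$(i,j) = cnj (M$$(j,i))" using M unfolding hermitian_iff by blast
  have eQ: "\<And>i j. i<2 \<Longrightarrow> j<2 \<Longrightarrow> Q$$(i,j) = cnj (Q$$(j,i))" using Q unfolding hermitian_iff by blast
  fix i j :: nat assume i: "i < 2*2" and j: "j < 2*2"
  have "kron M Q $$ (i,j) = M$$(i div 2, j div 2) * Q$$(i mod 2, j mod 2)" using i j Mc Qc by (subst kron_index) auto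
  also have "\<dots> = cnj (M$$(j div 2, i div 2)) * cnj (Q$$(j mod 2, i mod 2))"
    using eM[of "i div 2" "j div 2"] eQ[of "i mod 2" "j mod 2"] i j by (simp add: less_mult_imp_div_less)
  also have "\<dots> = cnj (kron M Q $$ (j,i))" using i j Mc Qc by (subst kron_index) auto
  finally show "kron M Q $$ (i,j) = cnj (kron M Q $$ (j,i))" .
qed

lemma kron22_index:
  assumes M: "M \<in> carrier_mat 2 2" and Q: "Q \<in> carrier_mat 2 2"
    and a: "\<alpha> < 2" "\<beta> < 2" "\<alpha>' < 2" "\<beta>' < 2"
  shows "kron M Q $$ (\<alpha>*2+\<beta>, \<alpha>'*2+\<beta>') = M$$(\<alpha>,\<alpha>') * Q$$(\<beta>,\<beta>')"
proof -
  have k1: "\<alpha>*2+\<beta> < 2*2" "\<alpha>'*2+\<beta>' < 2*2" using a idx_bound[of \<alpha> 2 \<beta> 2] idx_bound[of \<alpha>' 2 \<beta>' 2] by auto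
  show ?thesis using k1 M Q a by (subst kron_index) auto
qed

lemma sum4:
  fixes Y :: "complex mat" and M Q :: "complex mat"
  assumes M: "M \<in> carrier_mat 2 2" and Q: "Q \<in> carrier_mat 2 2"
  shows "(\<Sum>k<2*2. \<Sum>k'<2*2. kron M Q $$ (k,k') * Y $$ (k',k))
    = (\<Sum>\<alpha><2. \<Sum>\<beta><2. \<Sum>\<alpha>'<2. \<Sum>\<beta>'<2. M$$(\<alpha>,\<alpha>') * Q$$(\<beta>,\<beta>') * Y $$ (\<alpha>'*2+\<beta>', \<alpha>*2+\<beta>))"
proof -
  have "(\<Sum>k<2*2. \<Sum>k'<2*2. kron M Q $$ (k,k') * Y $$ (k',k))
     = (\<Sum>\<alpha><2. \<Sum>\<beta><2. \<Sum>k'<2*2. kron M Q $$ (\<alpha>*2+\<beta>,k') * Y $$ (k',\<alpha>*2+\<beta>))"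
    by (rule sum_split)
  also have "\<dots> = (\<Sum>\<alpha><2. \<Sum>\<beta><2. \<Sum>\<alpha>'<2. \<Sum>\<beta>'<2. kron M Q $$ (\<alpha>*2+\<beta>,\<alpha>'*2+\<beta>') * Y $$ (\<alpha>'*2+\<beta>',\<alpha>*2+\<beta>))"
    by (subst sum_split) simp
  also have "\<dots> = (\<Sum>\<alpha><2. \<Sum>\<beta><2. \<Sum>\<alpha>'<2. \<Sum>\<beta>'<2. M$$(\<alpha>,\<alpha>') * Q$$(\<beta>,\<beta>') * Y $$ (\<alpha>'*2+\<beta>', \<alpha>*2+\<beta>))"
    by (intro sum.cong refl) (simp add: kron22_index[OF M Q])
  finally show ?thesis .
qed

lemma trace_reduce:
  fixes Y :: "complex mat" and q :: "nat \<Rightarrow> real"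
  assumes M: "M \<in> carrier_mat 2 2"
  shows "(\<Sum>k<2*2. \<Sum>k'<2*2. kron M (mat 2 2 (\<lambda>(i,j). complex_of_real (lam * q i * q j))) $$ (k,k') * Y $$ (k',k))
    = complex_of_real lam * (\<Sum>a<2. \<Sum>a'<2. M$$(a,a') * Rv 2 2 Y (\<lambda>k. complex_of_real (q k)) $$ (a',a))"
  unfolding sum4[OF M mat_carrier]
  by (simp add: numeral_2_eq_2 lessThan_Suc Rv_def algebra_simps)

lemma Qr_herm: "hermitian 2 (mat 2 2 (\<lambda>(i,j). complex_of_real (lam * q i * q j)))"
  unfolding hermitian_iff by (auto simp: mult.commute mult.left_commute)

lemma sigma_psd:
  assumes M: "psd 2 M" and lam: "lam \<ge> 0" and R: "psd (2*2*d) R"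
  shows "psd d (ptrace_fst (2*2) d (kron (kron M (mat 2 2 (\<lambda>(i,j). complex_of_real (lam * q i * q j)))) (1\<^sub>m d) * R))"
proof (rule psdI)
  let ?Q = "mat 2 2 (\<lambda>(i,j). complex_of_real (lam * q i * q j))"
  have Mh: "hermitian 2 M" using psd_herm[OF M] .
  have Mc: "M \<in> carrier_mat 2 2" using Mh unfolding hermitian_iff by simp
  have Th: "hermitian (2*2) (kron M ?Q)" by (rule kron_herm[OF Mh Qr_herm])
  have Tc: "kron M ?Q \<in> carrier_mat (2*2) (2*2)" using Th unfolding hermitian_iff by simp
  have Rh: "hermitian (2*2*d) R" using psd_herm[OF R] .
  have Rc: "R \<in> carrier_mat (2*2*d) (2*2*d)" using Rh unfolding hermitian_iff by simp
  show "hermitian d (ptrace_fst (2*2) d (kron (kron M ?Q) (1\<^sub>m d) * R))"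
    by (rule herm_ptrace[OF Th Rh])
  fix v
  let ?Y = "Rv (2*2) d R v"
  have Yp: "psd (2*2) ?Y" by (rule Rv_psd[OF R])
  have Zp: "psd 2 (Rv 2 2 ?Y (\<lambda>k. complex_of_real (q k)))" by (rule Rv_psd) (use Yp in simp)
  have "qf d (ptrace_fst (2*2) d (kron (kron M ?Q) (1\<^sub>m d) * R)) v
     = (\<Sum>k<2*2. \<Sum>k'<2*2. kron M ?Q $$ (k,k') * ?Y $$ (k',k))"
    by (rule qf_ptrace[OF Tc Rc])
  also have "\<dots> = complex_of_real lam * (\<Sum>a<2. \<Sum>a'<2. M$$(a,a') * Rv 2 2 ?Y (\<lambda>k. complex_of_real (q k)) $$ (a',a))"
    by (rule trace_reduce[OF Mc])
  finally have e: "qf d (ptrace_fst (2*2) d (kron (kron M ?Q) (1\<^sub>m d) * R)) v = \<dots>" .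
  have t: "Im (\<Sum>a<2. \<Sum>a'<2. M$$(a,a') * Rv 2 2 ?Y (\<lambda>k. complex_of_real (q k)) $$ (a',a)) = 0 \<and>
     0 \<le> Re (\<Sum>a<2. \<Sum>a'<2. M$$(a,a') * Rv 2 2 ?Y (\<lambda>k. complex_of_real (q k)) $$ (a',a))"
    by (rule tr22[OF M Zp])
  show "Im (qf d (ptrace_fst (2*2) d (kron (kron M ?Q) (1\<^sub>m d) * R)) v) = 0 \<and>
        0 \<le> Re (qf d (ptrace_fst (2*2) d (kron (kron M ?Q) (1\<^sub>m d) * R)) v)"
    unfolding e using t lam by simp
qed

definition qv :: "nat \<Rightarrow> nat \<Rightarrow> nat \<Rightarrow> real" where
  "qv b y k = (if y = 0 then (if k = b then 1 else 0) else (if k = 0 then 1 else (if b = 0 then 1 else -1)))"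

definition lam :: "nat \<Rightarrow> real" where "lam y = (if y = 0 then 1 else 1/2)"

definition Qm :: "nat \<Rightarrow> nat \<Rightarrow> complex mat" where
  "Qm b y = mat 2 2 (\<lambda>(i,j). complex_of_real (lam y * qv b y i * qv b y j))"

lemma less2: "(i::nat) < 2 \<Longrightarrow> i = 0 \<or> i = 1" by auto

lemma Qm_proj: "y \<in> bits \<Longrightarrow> projective2 2 (Qm 0 y) (Qm 1 y)"
  unfolding projective2_def
proof (intro conjI)
  show "hermitian 2 (Qm 0 y)" "hermitian 2 (Qm 1 y)" unfolding Qm_def by (rule Qr_herm)+
  assume y: "y \<in> bits"
  show "Qm 0 y * Qm 0 y = Qm 0 y" "Qm 1 y * Qm 1 y = Qm 1 y" "Qm 0 y + Qm 1 y = 1\<^sub>m 2"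
    using y by (auto intro!: eq_matI dest!: less2 simp: Qm_def qv_def lam_def scalar_prod_def numeral_2_eq_2)
qed

definition entf :: "complex mat \<Rightarrow> nat \<Rightarrow> (nat \<Rightarrow> nat \<Rightarrow> complex) \<Rightarrow> (nat \<Rightarrow> nat \<Rightarrow> complex) \<Rightarrow> nat \<Rightarrow> nat \<Rightarrow> complex" where
  "entf R d m qq i j = (\<Sum>\<alpha><2. \<Sum>\<beta><2. \<Sum>\<alpha>'<2. \<Sum>\<beta>'<2. m \<alpha> \<alpha>' * qq \<beta> \<beta>' * R$$(\<alpha>'*(2*d)+(\<beta>'*d+i), \<alpha>*(2*d)+(\<beta>*d+j)))"

lemma entf_addL: "entf R d m1 q i j + entf R d m2 q i j = entf R d (\<lambda>a a'. m1 a a' + m2 a a') q i j"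
  unfolding entf_def by (simp add: sum.distrib ring_distribs)

lemma entf_addR: "entf R d m q1 i j + entf R d m q2 i j = entf R d m (\<lambda>a a'. q1 a a' + q2 a a') i j"
  unfolding entf_def by (simp add: sum.distrib ring_distribs)

lemma entf_cong: assumes "\<And>a a'. a < 2 \<Longrightarrow> a' < 2 \<Longrightarrow> m a a' = m' a a'"
  and "\<And>a a'. a < 2 \<Longrightarrow> a' < 2 \<Longrightarrow> q a a' = q' a a'"
  shows "entf R d m q i j = entf R d m' q' i j"
  unfolding entf_def using assms by (intro sum.cong refl) auto

lemma sig_entf:
  assumes "M \<in> carrier_mat 2 2" "Q \<in> carrier_mat 2 2" "R \<in> carrier_mat (2*2*d) (2*2*d)" "i < d" "j < d"
  shows "ptrace_fst (2*2) d (kron (kron M Q) (1\<^sub>m d) * R) $$ (i,j) = entf R d (\<lambda>a a'. M$$(a,a')) (\<lambda>b b'. Q$$(b,b')) i j"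
  unfolding entf_def by (rule sigma_entry[OF assms])

lemma sum_to_one: assumes "A \<in> carrier_mat 2 2" "B \<in> carrier_mat 2 2" "A + B = 1\<^sub>m 2"
  shows "\<And>a a'. a < 2 \<Longrightarrow> a' < 2 \<Longrightarrow> A$$(a,a') + B$$(a,a') = (if a = a' then 1 else 0)"
proof -
  fix a a' :: nat assume "a < 2" "a' < 2"
  then have "(A + B) $$ (a,a') = A$$(a,a') + B$$(a,a')" using assms(1,2) by (intro index_add_mat) auto
  moreover have "(A + B) $$ (a,a') = 1\<^sub>m 2 $$ (a,a')" using assms(3) by simp
  moreover have "1\<^sub>m 2 $$ (a,a') = (if a = a' then 1 else 0)" using \<open>a<2\<close> \<open>a'<2\<close> by simp
  ultimately show "A$$(a,a') + B$$(a,a') = (if a = a' then 1 else 0)" by metis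
qed

lemma trace_entf:
  assumes R: "R \<in> carrier_mat (2*2*d) (2*2*d)"
  shows "(\<Sum>i<d. entf R d (\<lambda>a a'. if a = a' then 1 else 0) (\<lambda>a a'. if a = a' then 1 else 0) i i) = trace_mat R"
proof -
  have "(\<Sum>i<d. entf R d (\<lambda>a a'. if a = a' then 1 else 0) (\<lambda>a a'. if a = a' then 1 else 0) i i)
      = (\<Sum>i<d. \<Sum>\<alpha><2. \<Sum>\<beta><2. R$$(\<alpha>*(2*d)+(\<beta>*d+i), \<alpha>*(2*d)+(\<beta>*d+i)))"
    unfolding entf_def by (simp add: numeral_2_eq_2 lessThan_Suc)
  also have "\<dots> = (\<Sum>\<alpha><2. \<Sum>i<d. \<Sum>\<beta><2. R$$(\<alpha>*(2*d)+(\<beta>*d+i), \<alpha>*(2*d)+(\<beta>*d+i)))"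
    by (rule sum.swap)
  also have "\<dots> = (\<Sum>\<alpha><2. \<Sum>\<beta><2. \<Sum>i<d. R$$(\<alpha>*(2*d)+(\<beta>*d+i), \<alpha>*(2*d)+(\<beta>*d+i)))"
    by (rule sum.cong[OF refl], rule sum.swap)
  also have "\<dots> = (\<Sum>\<alpha><2. \<Sum>I<2*d. R$$(\<alpha>*(2*d)+I, \<alpha>*(2*d)+I))"
    by (rule sum.cong[OF refl], rule sum_split[symmetric])
  also have "\<dots> = (\<Sum>l<2*(2*d). R$$(l,l))"
    by (rule sum_split[symmetric])
  also have "\<dots> = trace_mat R" unfolding trace_mat_def using R by (simp add: mult.assoc)
  finally show ?thesis .
qed

lemma povm_facts:
  assumes "povm2 2 A B"
  shows "psd 2 A" "psd 2 B" "A \<in> carrier_mat 2 2" "B \<in> carrier_mat 2 2"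
    "\<And>a a'. a < 2 \<Longrightarrow> a' < 2 \<Longrightarrow> A$$(a,a') + B$$(a,a') = (if a = a' then 1 else 0)"
proof -
  show pA: "psd 2 A" and pB: "psd 2 B" using assms unfolding povm2_def by auto
  show cA: "A \<in> carrier_mat 2 2" using psd_herm[OF pA] unfolding hermitian_iff by simp
  show cB: "B \<in> carrier_mat 2 2" using psd_herm[OF pB] unfolding hermitian_iff by simp
  show "\<And>a a'. a < 2 \<Longrightarrow> a' < 2 \<Longrightarrow> A$$(a,a') + B$$(a,a') = (if a = a' then 1 else 0)"
    using sum_to_one[OF cA cB] assms unfolding povm2_def by blast
qed

lemma Qm_carrier: "Qm b y \<in> carrier_mat 2 2" unfolding Qm_def by simp

lemma Qm_sum: "y \<in> bits \<Longrightarrow> a < 2 \<Longrightarrow> a' < 2 \<Longrightarrow> Qm 0 y $$ (a,a') + Qm 1 y $$ (a,a') = (if a = a' then 1 else 0)"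
  using sum_to_one[OF Qm_carrier Qm_carrier] Qm_proj unfolding projective2_def by blast

lemma ns:
  fixes d :: nat and \<rho> :: "complex mat" and M :: "nat \<Rightarrow> nat \<Rightarrow> complex mat"
  assumes state: "density (2*2*d) \<rho>"
    and povm0: "povm2 2 (M 0 0) (M 1 0)"
    and povm1: "povm2 2 (M 0 1) (M 1 1)"
  shows "no_signaling d (\<lambda>a b x y. ptrace_fst (2*2) d (kron (kron (M a x) (Qm b y)) (1\<^sub>m d) * \<rho>))"
proof -
  let ?S = "\<lambda>a b x y. ptrace_fst (2*2) d (kron (kron (M a x) (Qm b y)) (1\<^sub>m d) * \<rho>)"
  have rp: "psd (2*2*d) \<rho>" using state unfolding density_def by simp
  have rc: "\<rho> \<in> carrier_mat (2*2*d) (2*2*d)" using psd_herm[OF rp] unfolding hermitian_iff by simp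
  have Mp: "psd 2 (M a x)" if "a \<in> bits" "x \<in> bits" for a x
    using that povm_facts(1,2)[OF povm0] povm_facts(1,2)[OF povm1] by auto
  have Mc: "M a x \<in> carrier_mat 2 2" if "a \<in> bits" "x \<in> bits" for a x
    using psd_herm[OF Mp[OF that]] unfolding hermitian_iff by simp
  have Msum: "M 0 x $$ (a,a') + M 1 x $$ (a,a') = (if a = a' then 1 else 0)" if "x \<in> bits" "a < 2" "a' < 2" for x a a'
    using that povm_facts(5)[OF povm0] povm_facts(5)[OF povm1] by auto
  have ent: "?S a b x y $$ (i,j) = entf \<rho> d (\<lambda>c c'. M a x $$ (c,c')) (\<lambda>c c'. Qm b y $$ (c,c')) i j"
    if "a \<in> bits" "x \<in> bits" "i < d" "j < d" for a b x y i j
    by (rule sig_entf[OF Mc[OF that(1,2)] Qm_carrier rc that(3,4)])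
  let ?D = "\<lambda>c c'::nat. if c = c' then 1 else (0::complex)"
  have P: "\<forall>a\<in>bits. \<forall>b\<in>bits. \<forall>x\<in>bits. \<forall>y\<in>bits. psd d (?S a b x y)"
  proof (intro ballI)
    fix a b x y assume a: "a \<in> bits" and b: "b \<in> bits" and x: "x \<in> bits" and y: "y \<in> bits"
    have "lam y \<ge> 0" unfolding lam_def by simp
    then show "psd d (?S a b x y)" unfolding Qm_def by (rule sigma_psd[OF Mp[OF a x] _ rp])
  qed
  define \<rho>C where "\<rho>C = mat d d (\<lambda>(i,j). entf \<rho> d ?D ?D i j)"
  have T: "\<forall>x\<in>bits. \<forall>y\<in>bits. ?S 0 0 x y + ?S 0 1 x y + ?S 1 0 x y + ?S 1 1 x y = \<rho>C"
  proof (intro ballI eq_matI)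
    fix x y i j assume x: "x \<in> bits" and y: "y \<in> bits" and i: "i < dim_row \<rho>C" and j: "j < dim_col \<rho>C"
    then have i': "i < d" and j': "j < d" unfolding \<rho>C_def by auto
    have "(?S 0 0 x y + ?S 0 1 x y + ?S 1 0 x y + ?S 1 1 x y) $$ (i,j) =
      ?S 0 0 x y $$ (i,j) + ?S 0 1 x y $$ (i,j) + ?S 1 0 x y $$ (i,j) + ?S 1 1 x y $$ (i,j)"
      using i' j' by simp
    also have "\<dots> = entf \<rho> d (\<lambda>c c'. M 0 x $$ (c,c')) (\<lambda>c c'. Qm 0 y $$ (c,c')) i j
       + entf \<rho> d (\<lambda>c c'. M 0 x $$ (c,c')) (\<lambda>c c'. Qm 1 y $$ (c,c')) i j
       + entf \<rho> d (\<lambda>c c'. M 1 x $$ (c,c')) (\<lambda>c c'. Qm 0 y $$ (c,c')) i j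
       + entf \<rho> d (\<lambda>c c'. M 1 x $$ (c,c')) (\<lambda>c c'. Qm 1 y $$ (c,c')) i j"
      using x i' j' by (simp only: ent[OF _ x i' j'] insert_iff simp_thms)
    also have "\<dots> = entf \<rho> d (\<lambda>c c'. M 0 x $$ (c,c')) (\<lambda>c c'. Qm 0 y $$ (c,c') + Qm 1 y $$ (c,c')) i j
       + entf \<rho> d (\<lambda>c c'. M 1 x $$ (c,c')) (\<lambda>c c'. Qm 0 y $$ (c,c') + Qm 1 y $$ (c,c')) i j"
      by (simp add: entf_addR[symmetric] add.assoc)
    also have "\<dots> = entf \<rho> d (\<lambda>c c'. M 0 x $$ (c,c') + M 1 x $$ (c,c')) (\<lambda>c c'. Qm 0 y $$ (c,c') + Qm 1 y $$ (c,c')) i j"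
      by (rule entf_addL)
    also have "\<dots> = entf \<rho> d ?D ?D i j"
      by (rule entf_cong) (use x y Msum Qm_sum in auto)
    also have "\<dots> = \<rho>C $$ (i,j)" unfolding \<rho>C_def using i' j' by simp
    finally show "(?S 0 0 x y + ?S 0 1 x y + ?S 1 0 x y + ?S 1 1 x y) $$ (i,j) = \<rho>C $$ (i,j)" .
  qed (auto simp: \<rho>C_def)
  have trC: "trace_mat \<rho>C = 1"
  proof -
    have "trace_mat \<rho>C = (\<Sum>i<d. entf \<rho> d ?D ?D i i)" unfolding trace_mat_def \<rho>C_def by simp
    also have "\<dots> = trace_mat \<rho>" by (rule trace_entf[OF rc])
    finally show ?thesis using state unfolding density_def by simp
  qed
  have B: "\<forall>a\<in>bits. \<forall>x\<in>bits. ?S a 0 x 0 + ?S a 1 x 0 = ?S a 0 x 1 + ?S a 1 x 1"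
  proof (intro ballI eq_matI)
    fix a x i j assume a: "a \<in> bits" and x: "x \<in> bits" and i: "i < dim_row (?S a 0 x 1 + ?S a 1 x 1)"
      and j: "j < dim_col (?S a 0 x 1 + ?S a 1 x 1)"
    then have i': "i < d" and j': "j < d" by auto
    have e: "(?S a 0 x y + ?S a 1 x y) $$ (i,j) = entf \<rho> d (\<lambda>c c'. M a x $$ (c,c')) ?D i j" if y: "y \<in> bits" for y
    proof -
      have "(?S a 0 x y + ?S a 1 x y) $$ (i,j) = ?S a 0 x y $$ (i,j) + ?S a 1 x y $$ (i,j)" using i' j' by simp
      also have "\<dots> = entf \<rho> d (\<lambda>c c'. M a x $$ (c,c')) (\<lambda>c c'. Qm 0 y $$ (c,c') + Qm 1 y $$ (c,c')) i j"
        unfolding ent[OF a x i' j'] by (rule entf_addR)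
      also have "\<dots> = entf \<rho> d (\<lambda>c c'. M a x $$ (c,c')) ?D i j"
        by (rule entf_cong) (use y Qm_sum in auto)
      finally show ?thesis .
    qed
    show "(?S a 0 x 0 + ?S a 1 x 0) $$ (i,j) = (?S a 0 x 1 + ?S a 1 x 1) $$ (i,j)"
      using e[of 0] e[of 1] by simp
  qed auto
  have A: "\<forall>b\<in>bits. \<forall>y\<in>bits. ?S 0 b 0 y + ?S 1 b 0 y = ?S 0 b 1 y + ?S 1 b 1 y"
  proof (intro ballI eq_matI)
    fix b y i j assume b: "b \<in> bits" and y: "y \<in> bits" and i: "i < dim_row (?S 0 b 1 y + ?S 1 b 1 y)"
      and j: "j < dim_col (?S 0 b 1 y + ?S 1 b 1 y)"
    then have i': "i < d" and j': "j < d" by auto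
    have e: "(?S 0 b x y + ?S 1 b x y) $$ (i,j) = entf \<rho> d ?D (\<lambda>c c'. Qm b y $$ (c,c')) i j" if x: "x \<in> bits" for x
    proof -
      have "(?S 0 b x y + ?S 1 b x y) $$ (i,j) = ?S 0 b x y $$ (i,j) + ?S 1 b x y $$ (i,j)" using i' j' by simp
      also have "\<dots> = entf \<rho> d (\<lambda>c c'. M 0 x $$ (c,c') + M 1 x $$ (c,c')) (\<lambda>c c'. Qm b y $$ (c,c')) i j"
        by (simp only: ent[OF _ x i' j'] insert_iff simp_thms entf_addL)
      also have "\<dots> = entf \<rho> d ?D (\<lambda>c c'. Qm b y $$ (c,c')) i j"
        by (rule entf_cong) (use x Msum in auto)
      finally show ?thesis .
    qed
    show "(?S 0 b 0 y + ?S 1 b 0 y) $$ (i,j) = (?S 0 b 1 y + ?S 1 b 1 y) $$ (i,j)"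
      using e[of 0] e[of 1] by simp
  qed auto
  have "\<rho>C \<in> carrier_mat d d" unfolding \<rho>C_def by simp
  then show ?thesis unfolding no_signaling_def using P T trC A B by blast
qed

lemma entangled_indep:
  assumes e: "entangled 2 d \<psi>"
  shows "indep2 d (\<lambda>i. \<psi> $ (0*d+i)) (\<lambda>i. \<psi> $ (1*d+i))"
  unfolding indep2_def
proof (intro allI impI)
  fix a b :: complex assume h: "\<forall>i<d. a * \<psi> $ (0*d+i) + b * \<psi> $ (1*d+i) = 0"
  have pc: "\<psi> \<in> carrier_vec (2*d)" and np: "\<not> (\<exists>u \<in> carrier_vec 2. \<exists>v \<in> carrier_vec d. \<psi> = kron_vec u v)"
    using e unfolding entangled_def by auto
  have rep: "\<psi> = kron_vec u v" if u: "u \<in> carrier_vec 2" and v: "v \<in> carrier_vec d"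
    and eq: "\<And>(k::nat) (i::nat). k < 2 \<Longrightarrow> i < d \<Longrightarrow> \<psi> $ (k*d+i) = u $ k * v $ i" for u v
  proof (rule eq_vecI)
    show "dim_vec \<psi> = dim_vec (kron_vec u v)" using pc u v unfolding kron_vec_def by simp
    fix I assume "I < dim_vec (kron_vec u v)"
    then have I: "I < 2*d" using u v unfolding kron_vec_def by simp
    then have d0: "d > 0" by (cases d) auto
    have k: "I div d < 2" using I by (simp add: div_less_iff_less_mult mult.commute)
    have m: "I mod d < d" using d0 by simp
    have "\<psi> $ I = \<psi> $ ((I div d)*d + I mod d)" by simp
    also have "\<dots> = u $ (I div d) * v $ (I mod d)" by (rule eq[OF k m])
    also have "\<dots> = kron_vec u v $ I" unfolding kron_vec_def using I u v by simp
    finally show "\<psi> $ I = kron_vec u v $ I" .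
  qed
  show "a = 0 \<and> b = 0"
  proof (rule ccontr)
    assume nz: "\<not> (a = 0 \<and> b = 0)"
    show False
    proof (cases "b = 0")
      case True
      then have a0: "a \<noteq> 0" using nz by simp
      have w0: "\<And>i. i < d \<Longrightarrow> \<psi> $ (0*d+i) = 0" using h True a0 by simp
      define u :: "complex vec" where "u = vec 2 (\<lambda>k. if k = 0 then 0 else 1)"
      define v :: "complex vec" where "v = vec d (\<lambda>i. \<psi> $ (1*d+i))"
      have "\<psi> = kron_vec u v"
      proof (rule rep)
        fix k i :: nat assume k: "k < 2" and i: "i < d"
        show "\<psi> $ (k*d+i) = u $ k * v $ i"
          using k i w0[OF i] unfolding u_def v_def by (cases "k = 0") (auto dest!: less2)
      qed (auto simp: u_def v_def)
      moreover have "u \<in> carrier_vec 2" "v \<in> carrier_vec d" unfolding u_def v_def by auto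
      ultimately show False using np by blast
    next
      case False
      have w1: "\<And>i. i < d \<Longrightarrow> \<psi> $ (1*d+i) = (-a/b) * \<psi> $ (0*d+i)"
      proof -
        fix i assume "i < d"
        then have "a * \<psi> $ (0*d+i) + b * \<psi> $ (1*d+i) = 0" using h by blast
        then show "\<psi> $ (1*d+i) = (-a/b) * \<psi> $ (0*d+i)" using False
          by (simp add: field_simps add_eq_0_iff2)
      qed
      define u :: "complex vec" where "u = vec 2 (\<lambda>k. if k = 0 then 1 else -a/b)"
      define v :: "complex vec" where "v = vec d (\<lambda>i. \<psi> $ (0*d+i))"
      have "\<psi> = kron_vec u v"
      proof (rule rep)
        fix k i :: nat assume k: "k < 2" and i: "i < d"
        show "\<psi> $ (k*d+i) = u $ k * v $ i"
          using k i w1[OF i] unfolding u_def v_def by (cases "k = 0") (auto dest!: less2)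
      qed (auto simp: u_def v_def)
      moreover have "u \<in> carrier_vec 2" "v \<in> carrier_vec d" unfolding u_def v_def by auto
      ultimately show False using np by blast
    qed
  qed
qed

lemma indep_comb:
  assumes ind: "indep2 n w0 w1" and det: "p0 * r1 - p1 * r0 \<noteq> 0"
  shows "indep2 n (\<lambda>i. p0 * w0 i + p1 * w1 i) (\<lambda>i. r0 * w0 i + r1 * w1 i)"
  unfolding indep2_def
proof (intro allI impI)
  fix a b assume h: "\<forall>i<n. a * (p0 * w0 i + p1 * w1 i) + b * (r0 * w0 i + r1 * w1 i) = 0"
  have "\<forall>i<n. (a*p0 + b*r0) * w0 i + (a*p1 + b*r1) * w1 i = 0"
  proof (intro allI impI)
    fix i assume "i < n"
    then have "a * (p0 * w0 i + p1 * w1 i) + b * (r0 * w0 i + r1 * w1 i) = 0" using h by blast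
    then show "(a*p0 + b*r0) * w0 i + (a*p1 + b*r1) * w1 i = 0" by (simp add: algebra_simps)
  qed
  then have c: "a*p0 + b*r0 = 0" "a*p1 + b*r1 = 0" using ind unfolding indep2_def by blast+
  have "a * (p0 * r1 - p1 * r0) = r1 * (a*p0 + b*r0) - r0 * (a*p1 + b*r1)" by (simp add: algebra_simps)
  then have "a * (p0 * r1 - p1 * r0) = 0" using c by simp
  then have a0: "a = 0" using det by simp
  have "b * (p0 * r1 - p1 * r0) = p0 * (a*p1 + b*r1) - p1 * (a*p0 + b*r0)" by (simp add: algebra_simps)
  then have "b * (p0 * r1 - p1 * r0) = 0" using c by simp
  then have "b = 0" using det by simp
  then show "a = 0 \<and> b = 0" using a0 by simp
qed

lemma qf_rank1:
  assumes "\<And>i j. i < n \<Longrightarrow> j < n \<Longrightarrow> A$$(i,j) = \<kappa> * x i * cnj (x j)"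
  shows "qf n A v = \<kappa> * cnj (ipc n x v) * ipc n x v"
proof -
  have "qf n A v = (\<Sum>i<n. \<Sum>j<n. \<kappa> * (cnj (v i) * x i) * (cnj (x j) * v j))"
    unfolding qf_def using assms by (intro sum.cong refl) (simp add: algebra_simps)
  also have "\<dots> = \<kappa> * (\<Sum>i<n. \<Sum>j<n. (cnj (v i) * x i) * (cnj (x j) * v j))"
    by (simp add: sum_distrib_left mult.assoc)
  also have "\<dots> = \<kappa> * ((\<Sum>i<n. cnj (v i) * x i) * (\<Sum>j<n. cnj (x j) * v j))"
    by (simp only: sum_product)
  also have "(\<Sum>i<n. cnj (v i) * x i) = cnj (ipc n x v)" unfolding ipc_def by (simp add: mult.commute)
  finally show ?thesis unfolding ipc_def by (simp add: mult.assoc)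
qed

lemma sig_x0:
  assumes Mc: "M \<in> carrier_mat 2 2" and Qc: "Q \<in> carrier_mat 2 2" and rc: "R \<in> carrier_mat (2*2*d) (2*2*d)"
    and ha: "ptrace_fst 2 (2*d) (kron (kron M (1\<^sub>m 2)) (1\<^sub>m d) * R) = c \<cdot>\<^sub>m outer \<psi> \<psi>"
    and pc: "\<psi> \<in> carrier_vec (2*d)" and i: "i < d" and j: "j < d"
  shows "ptrace_fst (2*2) d (kron (kron M Q) (1\<^sub>m d) * R) $$ (i,j) =
     (\<Sum>\<beta><2. \<Sum>\<beta>'<2. Q$$(\<beta>,\<beta>') * (c * (\<psi> $ (\<beta>'*d+i) * cnj (\<psi> $ (\<beta>*d+j)))))"
proof -
  have "ptrace_fst (2*2) d (kron (kron M Q) (1\<^sub>m d) * R) $$ (i,j) =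
    (\<Sum>\<alpha><2. \<Sum>\<beta><2. \<Sum>\<alpha>'<2. \<Sum>\<beta>'<2. M$$(\<alpha>,\<alpha>') * Q$$(\<beta>,\<beta>') * R$$(\<alpha>'*(2*d)+(\<beta>'*d+i), \<alpha>*(2*d)+(\<beta>*d+j)))"
    by (rule sigma_entry[OF Mc Qc rc i j])
  also have "\<dots> = (\<Sum>\<beta><2. \<Sum>\<beta>'<2. Q$$(\<beta>,\<beta>') * (\<Sum>\<alpha><2. \<Sum>\<alpha>'<2. M$$(\<alpha>,\<alpha>') * R$$(\<alpha>'*(2*d) + (\<beta>'*d+i), \<alpha>*(2*d) + (\<beta>*d+j))))"
    by (simp add: numeral_2_eq_2 lessThan_Suc algebra_simps)
  also have "\<dots> = (\<Sum>\<beta><2. \<Sum>\<beta>'<2. Q$$(\<beta>,\<beta>') * (c * (\<psi> $ (\<beta>'*d+i) * cnj (\<psi> $ (\<beta>*d+j)))))"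
  proof (intro sum.cong refl)
    fix \<beta> \<beta>' :: nat assume b: "\<beta> \<in> {..<2}" "\<beta>' \<in> {..<2}"
    have I: "\<beta>'*d+i < 2*d" "\<beta>*d+j < 2*d" using b i j idx_bound[of \<beta>' 2 i d] idx_bound[of \<beta> 2 j d] by auto
    have "(\<Sum>\<alpha><2. \<Sum>\<alpha>'<2. M$$(\<alpha>,\<alpha>') * R$$(\<alpha>'*(2*d) + (\<beta>'*d+i), \<alpha>*(2*d) + (\<beta>*d+j)))
        = ptrace_fst 2 (2*d) (kron (kron M (1\<^sub>m 2)) (1\<^sub>m d) * R) $$ (\<beta>'*d+i, \<beta>*d+j)"
      by (rule rhoa_entry[OF Mc rc I, symmetric])
    also have "\<dots> = c * (\<psi> $ (\<beta>'*d+i) * cnj (\<psi> $ (\<beta>*d+j)))"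
      unfolding ha using I pc unfolding outer_def by simp
    finally show "Q$$(\<beta>,\<beta>') * (\<Sum>\<alpha><2. \<Sum>\<alpha>'<2. M$$(\<alpha>,\<alpha>') * R$$(\<alpha>'*(2*d) + (\<beta>'*d+i), \<alpha>*(2*d) + (\<beta>*d+j)))
        = Q$$(\<beta>,\<beta>') * (c * (\<psi> $ (\<beta>'*d+i) * cnj (\<psi> $ (\<beta>*d+j))))" by simp
  qed
  finally show ?thesis .
qed

definition chi :: "nat \<Rightarrow> nat \<Rightarrow> complex vec \<Rightarrow> nat \<Rightarrow> nat \<Rightarrow> complex" where
  "chi b y \<psi> d i = complex_of_real (qv b y 0) * \<psi> $ (0*d+i) + complex_of_real (qv b y 1) * \<psi> $ (1*d+i)"

lemma sig_x0_qf:
  assumes Mc: "M \<in> carrier_mat 2 2" and rc: "R \<in> carrier_mat (2*2*d) (2*2*d)"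
    and ha: "ptrace_fst 2 (2*d) (kron (kron M (1\<^sub>m 2)) (1\<^sub>m d) * R) = c \<cdot>\<^sub>m outer \<psi> \<psi>"
    and pc: "\<psi> \<in> carrier_vec (2*d)"
  shows "qf d (ptrace_fst (2*2) d (kron (kron M (Qm b y)) (1\<^sub>m d) * R)) v
      = (c * complex_of_real (lam y)) * cnj (ipc d (chi b y \<psi> d) v) * ipc d (chi b y \<psi> d) v"
proof (rule qf_rank1)
  fix i j assume i: "i < d" and j: "j < d"
  show "ptrace_fst (2*2) d (kron (kron M (Qm b y)) (1\<^sub>m d) * R) $$ (i,j) =
     (c * complex_of_real (lam y)) * chi b y \<psi> d i * cnj (chi b y \<psi> d j)"
    unfolding sig_x0[OF Mc Qm_carrier rc ha pc i j]
    by (simp add: Qm_def chi_def numeral_2_eq_2 lessThan_Suc algebra_simps)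
qed

lemma qf_sum:
  assumes "\<And>i j. i < n \<Longrightarrow> j < n \<Longrightarrow> A$$(i,j) = (\<Sum>k<N. c k * B k $$ (i,j))"
  shows "qf n A v = (\<Sum>k<N. c k * qf n (B k) v)"
proof -
  have "qf n A v = (\<Sum>i<n. \<Sum>j<n. \<Sum>k<N. c k * (cnj (v i) * B k $$ (i,j) * v j))"
    unfolding qf_def using assms by (intro sum.cong refl) (simp add: sum_distrib_left sum_distrib_right algebra_simps)
  also have "\<dots> = (\<Sum>i<n. \<Sum>k<N. \<Sum>j<n. c k * (cnj (v i) * B k $$ (i,j) * v j))"
    by (rule sum.cong[OF refl], rule sum.swap)
  also have "\<dots> = (\<Sum>k<N. \<Sum>i<n. \<Sum>j<n. c k * (cnj (v i) * B k $$ (i,j) * v j))"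
    by (rule sum.swap)
  also have "\<dots> = (\<Sum>k<N. c k * qf n (B k) v)"
    unfolding qf_def by (simp add: sum_distrib_left)
  finally show ?thesis .
qed

lemma qf_lin2:
  assumes "\<And>i j. i < n \<Longrightarrow> j < n \<Longrightarrow> A$$(i,j) = a * B$$(i,j) + b * C$$(i,j)"
  shows "qf n A v = a * qf n B v + b * qf n C v"
  unfolding qf_def using assms by (simp add: sum.distrib sum_distrib_left algebra_simps)

lemma kill:
  fixes N :: nat and cf :: "nat \<Rightarrow> real" and r :: "nat \<Rightarrow> complex mat"
  assumes eps: "0 < \<epsilon>" "\<epsilon> \<le> 1"
    and dec: "S = complex_of_real \<epsilon> \<cdot>\<^sub>m mat d d (\<lambda>ij. \<Sum>k<N. complex_of_real (cf k) * r k $$ ij) + complex_of_real (1 - \<epsilon>) \<cdot>\<^sub>m S2"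
    and S2: "psd d S2" and rk: "\<And>k. k < N \<Longrightarrow> psd d (r k)" and cf: "\<And>k. k < N \<Longrightarrow> 0 \<le> cf k"
    and jN: "j < N" and cfj: "cf j > 0" and z: "qf d S v = 0"
  shows "qf d (r j) v = 0"
proof -
  have S2c: "S2 \<in> carrier_mat d d" using psd_herm[OF S2] unfolding hermitian_iff by simp
  have "qf d S v = complex_of_real \<epsilon> * qf d (mat d d (\<lambda>ij. \<Sum>k<N. complex_of_real (cf k) * r k $$ ij)) v
        + complex_of_real (1 - \<epsilon>) * qf d S2 v"
    by (rule qf_lin2) (use S2c in \<open>simp add: dec\<close>)
  also have "qf d (mat d d (\<lambda>ij. \<Sum>k<N. complex_of_real (cf k) * r k $$ ij)) v = (\<Sum>k<N. complex_of_real (cf k) * qf d (r k) v)"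
    by (rule qf_sum) simp
  finally have e: "0 = complex_of_real \<epsilon> * (\<Sum>k<N. complex_of_real (cf k) * qf d (r k) v) + complex_of_real (1 - \<epsilon>) * qf d S2 v"
    using z by simp
  then have "0 = \<epsilon> * (\<Sum>k<N. cf k * Re (qf d (r k) v)) + (1 - \<epsilon>) * Re (qf d S2 v)"
  proof -
    have "Re (complex_of_real \<epsilon> * (\<Sum>k<N. complex_of_real (cf k) * qf d (r k) v) + complex_of_real (1 - \<epsilon>) * qf d S2 v) = 0"
      using e by (metis zero_complex.sel(1))
    then show ?thesis by (simp add: Re_sum)
  qed
  moreover have "0 \<le> Re (qf d S2 v)" using psd_qf[OF S2] by blast
  moreover have nn: "\<And>k. k \<in> {..<N} \<Longrightarrow> 0 \<le> cf k * Re (qf d (r k) v)"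
    using cf psd_qf[OF rk] by simp
  moreover have "cf j * Re (qf d (r j) v) \<le> (\<Sum>k<N. cf k * Re (qf d (r k) v))"
    using jN by (intro member_le_sum nn) (simp_all)
  ultimately have "\<epsilon> * (cf j * Re (qf d (r j) v)) \<le> 0" using eps
    by (smt (verit, best) mult_left_mono mult_nonneg_nonneg)
  moreover have "0 \<le> Re (qf d (r j) v)" using psd_qf[OF rk[OF jN]] by blast
  ultimately have "Re (qf d (r j) v) = 0" using eps cfj
    by (smt (verit) mult_pos_pos)
  moreover have "Im (qf d (r j) v) = 0" using psd_qf[OF rk[OF jN]] by blast
  ultimately show ?thesis by (simp add: complex_eq_iff)
qed

theorem theorem4:
  fixes d :: nat and \<rho> :: "complex mat" and M :: "nat \<Rightarrow> nat \<Rightarrow> complex mat"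
  assumes state: "density (2*2*d) \<rho>"
    and rank2: "mrank (2*2*d) \<rho> = 2"
    and povm0: "povm2 2 (M 0 0) (M 1 0)"
    and povm1: "povm2 2 (M 0 1) (M 1 1)"
    and cond: "\<forall>a\<in>bits.
       mrank (2*d) (ptrace_fst 2 (2*d) (kron (kron (M a 0) (1\<^sub>m 2)) (1\<^sub>m d) * \<rho>)) = 1 \<and>
       (\<exists>\<psi> (c::complex). entangled 2 d \<psi> \<and>
          ptrace_fst 2 (2*d) (kron (kron (M a 0) (1\<^sub>m 2)) (1\<^sub>m d) * \<rho>) = c \<cdot>\<^sub>m outer \<psi> \<psi>)"
  shows "\<exists>Q :: nat \<Rightarrow> nat \<Rightarrow> complex mat.
           projective2 2 (Q 0 0) (Q 1 0) \<and> projective2 2 (Q 0 1) (Q 1 1) \<and>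
           on_edge d (\<lambda>a b x y. ptrace_fst (2*2) d (kron (kron (M a x) (Q b y)) (1\<^sub>m d) * \<rho>))"
proof (intro exI conjI)
  show "projective2 2 (Qm 0 0) (Qm 1 0)" "projective2 2 (Qm 0 1) (Qm 1 1)" by (rule Qm_proj, simp)+
  let ?S = "\<lambda>a b x y. ptrace_fst (2*2) d (kron (kron (M a x) (Qm b y)) (1\<^sub>m d) * \<rho>)"
  have rp: "psd (2*2*d) \<rho>" using state unfolding density_def by simp
  have rc: "\<rho> \<in> carrier_mat (2*2*d) (2*2*d)" using psd_herm[OF rp] unfolding hermitian_iff by simp
  have Mc: "M a 0 \<in> carrier_mat 2 2" if "a \<in> bits" for a
    using that povm_facts(3,4)[OF povm0] by auto
  show "on_edge d ?S" unfolding on_edge_def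
  proof (intro conjI allI impI)
    show "no_signaling d ?S" by (rule ns[OF state povm0 povm1])
    fix \<epsilon> :: real and S1 S2
    assume H: "0 \<le> \<epsilon> \<and> \<epsilon> \<le> 1 \<and> LHS d S1 \<and> no_signaling d S2 \<and>
        (\<forall>a\<in>bits. \<forall>b\<in>bits. \<forall>x\<in>bits. \<forall>y\<in>bits.
           ?S a b x y = complex_of_real \<epsilon> \<cdot>\<^sub>m S1 a b x y + complex_of_real (1 - \<epsilon>) \<cdot>\<^sub>m S2 a b x y)"
    show "\<epsilon> = 0"
    proof (rule ccontr)
      assume ne: "\<epsilon> \<noteq> 0"
      then have ep: "0 < \<epsilon>" "\<epsilon> \<le> 1" using H by auto
      have dec: "\<And>a b x y. a\<in>bits \<Longrightarrow> b\<in>bits \<Longrightarrow> x\<in>bits \<Longrightarrow> y\<in>bits \<Longrightarrow>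
           ?S a b x y = complex_of_real \<epsilon> \<cdot>\<^sub>m S1 a b x y + complex_of_real (1 - \<epsilon>) \<cdot>\<^sub>m S2 a b x y"
        using H by blast
      have S2p: "\<And>a b x y. a\<in>bits \<Longrightarrow> b\<in>bits \<Longrightarrow> x\<in>bits \<Longrightarrow> y\<in>bits \<Longrightarrow> psd d (S2 a b x y)"
        using H unfolding no_signaling_def by blast
      obtain N :: nat and q :: "nat \<Rightarrow> real" and p p' :: "nat \<Rightarrow> nat \<Rightarrow> nat \<Rightarrow> real" and r :: "nat \<Rightarrow> complex mat"
        where q0: "\<forall>j<N. 0 \<le> q j" and q1: "(\<Sum>j<N. q j) = 1"
          and rd: "\<forall>j<N. density d (r j)"
          and pp0: "\<forall>j<N. \<forall>a\<in>bits. \<forall>x\<in>bits. 0 \<le> p j a x \<and> 0 \<le> p' j a x"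
          and pp1: "\<forall>j<N. \<forall>x\<in>bits. p j 0 x + p j 1 x = 1 \<and> p' j 0 x + p' j 1 x = 1"
          and S1e: "\<forall>a\<in>bits. \<forall>b\<in>bits. \<forall>x\<in>bits. \<forall>y\<in>bits.
             S1 a b x y = mat d d (\<lambda>ij. \<Sum>j<N. complex_of_real (q j * p j a x * p' j b y) * r j $$ ij)"
        using H unfolding LHS_def by blast
      obtain j where jN: "j < N" and qj: "q j > 0"
      proof -
        have "\<exists>j<N. q j \<noteq> 0"
        proof (rule ccontr)
          assume "\<not> (\<exists>j<N. q j \<noteq> 0)"
          then have "(\<Sum>j<N. q j) = 0" by simp
          then show False using q1 by simp
        qed
        then show ?thesis using q0 that by force
      qed
      have rp: "\<And>k. k < N \<Longrightarrow> psd d (r k)" using rd unfolding density_def by blast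
      obtain a where a: "a \<in> bits" and pa: "p j a 0 > 0"
        using pp0 pp1 jN by (smt (verit) insertCI)
      obtain b0 where b0: "b0 \<in> bits" and pb0: "p' j b0 0 > 0"
        using pp0 pp1 jN by (smt (verit) insertCI)
      obtain b1 where b1: "b1 \<in> bits" and pb1: "p' j b1 1 > 0"
        using pp0 pp1 jN by (smt (verit) insertCI)
      obtain \<psi> c where ent: "entangled 2 d \<psi>"
        and ha: "ptrace_fst 2 (2*d) (kron (kron (M a 0) (1\<^sub>m 2)) (1\<^sub>m d) * \<rho>) = c \<cdot>\<^sub>m outer \<psi> \<psi>"
        using cond a by blast
      have pc: "\<psi> \<in> carrier_vec (2*d)" using ent unfolding entangled_def by simp
      let ?x1 = "chi b0 0 \<psi> d" and ?x2 = "chi b1 1 \<psi> d"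
      have ind: "indep2 d ?x1 ?x2"
        unfolding chi_def
      proof (rule indep_comb[OF entangled_indep[OF ent]])
        show "complex_of_real (qv b0 0 0) * complex_of_real (qv b1 1 1) - complex_of_real (qv b0 0 1) * complex_of_real (qv b1 1 0) \<noteq> 0"
          using b0 b1 by (auto simp: qv_def)
      qed
      have killy: "qf d (r j) v = 0"
        if b: "b \<in> bits" and y: "y \<in> bits" and pb: "p' j b y > 0" and z: "qf d (?S a b 0 y) v = 0" for b y v
      proof (rule kill[where cf = "\<lambda>k. q k * p k a 0 * p' k b y"])
        show "0 < \<epsilon>" "\<epsilon> \<le> 1" using ep by auto
        show "?S a b 0 y = complex_of_real \<epsilon> \<cdot>\<^sub>m mat d d (\<lambda>ij. \<Sum>k<N. complex_of_real (q k * p k a 0 * p' k b y) * r k $$ ij)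
             + complex_of_real (1 - \<epsilon>) \<cdot>\<^sub>m S2 a b 0 y"
        proof -
          have d1: "?S a b 0 y = complex_of_real \<epsilon> \<cdot>\<^sub>m S1 a b 0 y + complex_of_real (1 - \<epsilon>) \<cdot>\<^sub>m S2 a b 0 y"
            by (rule dec[OF a b _ y]) simp
          have d2: "S1 a b 0 y = mat d d (\<lambda>ij. \<Sum>k<N. complex_of_real (q k * p k a 0 * p' k b y) * r k $$ ij)"
            using S1e a b y by blast
          show ?thesis by (simp only: d1 d2)
        qed
        show "psd d (S2 a b 0 y)" using S2p a b y by simp
        show "\<And>k. k < N \<Longrightarrow> psd d (r k)" by (rule rp)
        show "0 \<le> q k * p k a 0 * p' k b y" if k: "k < N" for k
        proof -
          have "0 \<le> q k" using q0 k by blast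
          moreover have "0 \<le> p k a 0" using pp0 k a by blast
          moreover have "0 \<le> p' k b y" using pp0 k b y by blast
          ultimately show ?thesis by simp
        qed
        show "j < N" by (rule jN)
        show "0 < q j * p j a 0 * p' j b y" using qj pa pb by simp
        show "qf d (?S a b 0 y) v = 0" by (rule z)
      qed
      have h1: "qf d (r j) v = 0" if "ipc d ?x1 v = 0" for v
      proof (rule killy[OF b0 _ pb0])
        show "qf d (?S a b0 0 0) v = 0"
          unfolding sig_x0_qf[OF Mc[OF a] rc ha pc] using that by simp
      qed simp
      have h2: "qf d (r j) v = 0" if "ipc d ?x2 v = 0" for v
      proof (rule killy[OF b1 _ pb1])
        show "qf d (?S a b1 0 1) v = 0"
          unfolding sig_x0_qf[OF Mc[OF a] rc ha pc] using that by simp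
      qed simp
      have diag: "\<And>i. i < d \<Longrightarrow> r j $$ (i,i) = 0"
        using edge_core[OF rp[OF jN] ind h1 h2] by blast
      have rjc: "r j \<in> carrier_mat d d" using psd_herm[OF rp[OF jN]] unfolding hermitian_iff by simp
      have "trace_mat (r j) = 0" unfolding trace_mat_def using rjc diag by simp
      moreover have "trace_mat (r j) = 1" using rd jN unfolding density_def by blast
      ultimately show False by simp
    qed
  qed
qed

end
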